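(* Let $0<\alpha<\beta<\infty$, $\mathcal{F}\subset\mathcal{F}_B^{[\alpha,\beta]}$ star-shaped with $L_2$-diameter $d$, $f\in\mathcal{F}$, $\epsilon\in(0,\tfrac13]$ with $k=1/(3\epsilon)$ an integer dividing $N$, and $\mathbf X$ the observed sample from $\tilde X_1,\dots,\tilde X_N$ i.i.d. with density $f$ after an arbitrary corruption of at most $\epsilon N$ observations. Let $c>0$ be a sufficiently large constant (chosen independently of the data), $C=\frac c2-1$, and $C_{10}$ as below. For $J\in\mathbb{N}$ let $\tau_J=\frac{\sqrt{C_{10}}\,d}{2^{J-1}(C+1)}$, and let $\bar J$ be the maximal $J\in\mathbb{N}$ with $$N\tau_J^2>\max\Big\{2\log\Big(\big[\mathcal{M}^{\mathrm{loc}}_{\mathcal{F}}\big(\tau_J\tfrac{c}{\sqrt{C_{10}}},2c\big)\big]^2\Big),\ \log2\Big\},$$ or $\bar J=1$ if no such $J$ exists. Let $\nu^*$ be the output of the multistage estimator below run with $\tilde J\ge\bar J$ levels. Then $$\mathbb{E}_f\|\nu^*-f\|_2^2\lesssim\max\{\tau_{\bar J}^2,\epsilon\}\wedge d^2 .$$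
   Context: $B\subseteq\mathbb{R}^p$ compact Borel with positive measure, $\mu$ a probability measure on $B$; $\mathcal{F}_B^{[\alpha,\beta]}$ the measurable $f:B\to[\alpha,\beta]$ with $\int_Bf\,d\mu=1$; $\|f-g\|_2=(\int_B(f-g)^2d\mu)^{1/2}$; $B_2(q,r)$ the closed $L_2$ ball; $\mathcal{F}$ star-shaped (some $f_0\in\mathcal{F}$ with $tf+(1-t)f_0\in\mathcal{F}$ for $f\in\mathcal{F},t\in[0,1]$). An $\eta$-packing of $S$ is a subset of $S$ with pairwise distances $>\eta$; $\mathcal{M}(\eta,S)$ is the maximal cardinality of such a set; local metric entropy: $\mathcal{M}^{\mathrm{loc}}_{\mathcal{F}}(\tau,c')=\sup_{g\in\mathcal{F}}\mathcal{M}(\tau/c',\mathcal{F}\cap B_2(g,\tau))$. Constants: $h(\gamma)=\frac{\gamma-1-\log\gamma}{(\gamma-1)^2}$ ($\gamma\ne1$), $h(1)=\frac12$, $c(\alpha,\beta)=h(\beta/\alpha)/\beta$, $K=\beta/(\alpha^2c(\alpha,\beta))$, $L(\alpha,\beta,C)=\frac{\{\sqrt{c(\alpha,\beta)}(C-1)-\sqrt{1/\alpha}\}^2}{2(2K+\frac23\log(\beta/\alpha))}$ with $C>1+\sqrt{1/(\alpha c(\alpha,\beta))}$, and $C_{10}=\frac{L(\alpha,\beta,C)}{4}(\frac12-\frac\phi3)$ for a fixed $\phi\in(1,\frac32)$. Comparison: with a fixed partition $G_1,\dots,G_{N/k}$ of $\{1,\dots,N\}$ into groups of size $k$, $\psi(g,g',\mathbf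 X)=\mathbb{1}\big(\sum_{j}\mathbb{1}(\sum_{i\in G_j}\log\frac{g(X_i)}{g'(X_i)}>0)\ge\frac N{2k}\big)$, and $g'\prec g$ means $\psi(g,g',\mathbf X)=1$. Selection rule on a finite set $\{u_1,\dots,u_M\}$ at scale $\delta$: $E_i=\{j:u_i\prec u_j,\|u_i-u_j\|_2\ge C\delta\}$, $T_i=\max_{j\in E_i}\|u_i-u_j\|_2$ (or $0$ if $E_i=\emptyset$), select $u_{i^*}$ with $i^*\in\operatorname{argmin}_iT_i$. Estimator (tree built before seeing data): pick an arbitrary root $\nu_1\in\mathcal{F}$, level $\mathcal{L}(1)=\{\nu_1\}$. Level 2: the offspring of $\nu_1$ form a maximal $d/c$-packing of $\mathcal{F}$. For $3\le j\le\tilde J$: for each $q\in\mathcal{L}(j-1)$ take a maximal $\frac{d}{2^{j-1}c}$-packing of $B_2(q,d/2^{j-2})\cap\mathcal{F}$ as candidate offspring of $q$; list all candidates in a fixed order and, while the list is nonempty, take its first element $q_l$, let $T$ be the other listed candidates within distance $\frac{d}{2^{j-1}c}$ of $q_l$, replace each member of $T$ among its parent's offspring by $q_l$, and remove $q_l$ and $T$ from the list; $\mathcal{L}(j)$ is the union of the resulting offspring sets. Then, using the data, for $j=2,\dots,\tilde J$ set $\nu_j$ to be the element of the offspring set of $\nu_{j-1}$ chosen by the selection rule at scale $\delta_j=\frac{d}{2^{j-2}c}$; output $\nu^*=\nu_{\tilde J}$. $\lesssim$ hides a positive constant independent of $N$, $\epsilon$, $f$ and the corruption. *)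

theory Defs
  imports "HOL-Probability.Probability"
begin

definition L2dist :: "'a measure \<Rightarrow> ('a \<Rightarrow> real) \<Rightarrow> ('a \<Rightarrow> real) \<Rightarrow> real" where
  "L2dist \<mu> f g = sqrt (integral\<^sup>L \<mu> (\<lambda>x. (f x - g x)^2))"

definition L2ball :: "'a measure \<Rightarrow> ('a \<Rightarrow> real) \<Rightarrow> real \<Rightarrow> ('a \<Rightarrow> real) set" where
  "L2ball \<mu> q r = {g. L2dist \<mu> q g \<le> r}"

definition dens_class :: "'a measure \<Rightarrow> 'a set \<Rightarrow> real \<Rightarrow> real \<Rightarrow> ('a \<Rightarrow> real) set" where
  "dens_class \<mu> B \<alpha> \<beta> = {f. f \<in> borel_measurable \<mu> \<and> (\<forall>x\<in>B. \<alpha> \<le> f x \<and> f x \<le> \<beta>)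
                          \<and> integral\<^sup>L \<mu> f = 1}"

definition star_shaped :: "('a \<Rightarrow> real) set \<Rightarrow> bool" where
  "star_shaped F \<longleftrightarrow> (\<exists>f0\<in>F. \<forall>f\<in>F. \<forall>t::real. 0 \<le> t \<and> t \<le> 1 \<longrightarrow>
                          (\<lambda>x. t * f x + (1 - t) * f0 x) \<in> F)"

definition L2diam :: "'a measure \<Rightarrow> ('a \<Rightarrow> real) set \<Rightarrow> real" where
  "L2diam \<mu> F = (SUP p\<in>F \<times> F. L2dist \<mu> (fst p) (snd p))"

definition is_packing :: "'a measure \<Rightarrow> real \<Rightarrow> ('a \<Rightarrow> real) set \<Rightarrow> ('a \<Rightarrow> real) set \<Rightarrow> bool" where
  "is_packing \<mu> \<eta> S P \<longleftrightarrow> P \<subseteq> S \<and> (\<forall>u\<in>P. \<forall>v\<in>P. u \<noteq> v \<longrightarrow> L2dist \<mu> u v > \<eta>)"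

definition maximal_packing :: "'a measure \<Rightarrow> real \<Rightarrow> ('a \<Rightarrow> real) set \<Rightarrow> ('a \<Rightarrow> real) set \<Rightarrow> bool" where
  "maximal_packing \<mu> \<eta> S P \<longleftrightarrow> is_packing \<mu> \<eta> S P \<and>
      (\<forall>Q. is_packing \<mu> \<eta> S Q \<and> P \<subseteq> Q \<longrightarrow> Q = P)"

definition packing_number :: "'a measure \<Rightarrow> real \<Rightarrow> ('a \<Rightarrow> real) set \<Rightarrow> enat" where
  "packing_number \<mu> \<eta> S = (SUP P\<in>{P. is_packing \<mu> \<eta> S P \<and> finite P}. enat (card P))"

definition loc_entropy :: "'a measure \<Rightarrow> ('a \<Rightarrow> real) set \<Rightarrow> real \<Rightarrow> real \<Rightarrow> enat" where
  "loc_entropy \<mu> F \<tau> c' = (SUP g\<in>F. packing_number \<mu> (\<tau> / c') (F \<inter> L2ball \<mu> g \<tau>))"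

definition hfun :: "real \<Rightarrow> real" where
  "hfun \<gamma> = (if \<gamma> = 1 then 1/2 else (\<gamma> - 1 - ln \<gamma>) / (\<gamma> - 1)^2)"

definition cab :: "real \<Rightarrow> real \<Rightarrow> real" where
  "cab \<alpha> \<beta> = hfun (\<beta> / \<alpha>) / \<beta>"

definition Kab :: "real \<Rightarrow> real \<Rightarrow> real" where
  "Kab \<alpha> \<beta> = \<beta> / (\<alpha>^2 * cab \<alpha> \<beta>)"

definition Lfun :: "real \<Rightarrow> real \<Rightarrow> real \<Rightarrow> real" where
  "Lfun \<alpha> \<beta> C = (sqrt (cab \<alpha> \<beta>) * (C - 1) - sqrt (1/\<alpha>))^2
                   / (2 * (2 * Kab \<alpha> \<beta> + 2/3 * ln (\<beta> / \<alpha>)))"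

definition C10 :: "real \<Rightarrow> real \<Rightarrow> real \<Rightarrow> real \<Rightarrow> real" where
  "C10 \<alpha> \<beta> C \<phi> = Lfun \<alpha> \<beta> C / 4 * (1/2 - \<phi>/3)"

definition tauJ :: "real \<Rightarrow> real \<Rightarrow> real \<Rightarrow> nat \<Rightarrow> real" where
  "tauJ C10' C d J = sqrt C10' * d / (2^(J - 1) * (C + 1))"

definition Jcond :: "'a measure \<Rightarrow> ('a \<Rightarrow> real) set \<Rightarrow> real \<Rightarrow> real \<Rightarrow> real \<Rightarrow> real \<Rightarrow> nat \<Rightarrow> nat \<Rightarrow> bool" where
  "Jcond \<mu> F C10' C c d N J \<longleftrightarrow>
     (let \<tau> = tauJ C10' C d J; M = loc_entropy \<mu> F (\<tau> * c / sqrt C10') (2 * c) in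
      M \<noteq> \<infinity> \<and> real N * \<tau>^2 > max (2 * ln ((real (the_enat M))^2)) (ln 2))"

text \<open>psi(g,g',X) = 1, with groups G 0, ..., G (N div k - 1) partitioning the indices {..<N}.\<close>
definition psi :: "nat \<Rightarrow> nat \<Rightarrow> (nat \<Rightarrow> nat set) \<Rightarrow> (nat \<Rightarrow> 'a) \<Rightarrow> ('a \<Rightarrow> real) \<Rightarrow> ('a \<Rightarrow> real) \<Rightarrow> bool" where
  "psi N k G X g g' \<longleftrightarrow>
     real (card {j \<in> {..<N div k}. (\<Sum>i\<in>G j. ln (g (X i) / g' (X i))) > 0}) \<ge> real N / (2 * real k)"

definition prec :: "nat \<Rightarrow> nat \<Rightarrow> (nat \<Rightarrow> nat set) \<Rightarrow> (nat \<Rightarrow> 'a) \<Rightarrow> ('a \<Rightarrow> real) \<Rightarrow> ('a \<Rightarrow> real) \<Rightarrow> bool" where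
  "prec N k G X g' g \<longleftrightarrow> psi N k G X g g'"

definition Tval :: "'a measure \<Rightarrow> nat \<Rightarrow> nat \<Rightarrow> (nat \<Rightarrow> nat set) \<Rightarrow> (nat \<Rightarrow> 'a) \<Rightarrow> real \<Rightarrow> real
                    \<Rightarrow> ('a \<Rightarrow> real) set \<Rightarrow> ('a \<Rightarrow> real) \<Rightarrow> real" where
  "Tval \<mu> N k G X C \<delta> U u =
     Max ({L2dist \<mu> u v | v. v \<in> U \<and> prec N k G X u v \<and> L2dist \<mu> u v \<ge> C * \<delta>} \<union> {0})"

definition selected :: "'a measure \<Rightarrow> nat \<Rightarrow> nat \<Rightarrow> (nat \<Rightarrow> nat set) \<Rightarrow> (nat \<Rightarrow> 'a) \<Rightarrow> real \<Rightarrow> real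
                    \<Rightarrow> ('a \<Rightarrow> real) set \<Rightarrow> ('a \<Rightarrow> real) \<Rightarrow> bool" where
  "selected \<mu> N k G X C \<delta> U u \<longleftrightarrow> u \<in> U \<and> (\<forall>v\<in>U. Tval \<mu> N k G X C \<delta> U u \<le> Tval \<mu> N k G X C \<delta> U v)"

text \<open>Merging pass over the ordered list of (parent, candidate) pairs: the first listed candidate
  absorbs all other listed candidates within distance eta; the result lists (parent, offspring).\<close>
function merge_cands :: "'a measure \<Rightarrow> real \<Rightarrow> (('a \<Rightarrow> real) \<times> ('a \<Rightarrow> real)) list
                          \<Rightarrow> (('a \<Rightarrow> real) \<times> ('a \<Rightarrow> real)) list" where
  "merge_cands \<mu> \<eta> [] = []"
| "merge_cands \<mu> \<eta> ((q, u) # rest) =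
     (q, u) # map (\<lambda>p. (fst p, u)) (filter (\<lambda>p. L2dist \<mu> u (snd p) \<le> \<eta>) rest)
     @ merge_cands \<mu> \<eta> (filter (\<lambda>p. \<not> L2dist \<mu> u (snd p) \<le> \<eta>) rest)"
  by pat_completeness auto
termination
  by (relation "Wellfounded.measure (\<lambda>(_, _, xs). length xs)") (auto simp: le_imp_less_Suc)

definition valid_tree :: "'a measure \<Rightarrow> ('a \<Rightarrow> real) set \<Rightarrow> real \<Rightarrow> real \<Rightarrow> ('a \<Rightarrow> real) \<Rightarrow> nat
      \<Rightarrow> (nat \<Rightarrow> ('a \<Rightarrow> real) set) \<Rightarrow> (nat \<Rightarrow> ('a \<Rightarrow> real) \<Rightarrow> ('a \<Rightarrow> real) set) \<Rightarrow> bool" where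
  "valid_tree \<mu> F d c \<nu>1 Jt Lv off \<longleftrightarrow>
     \<nu>1 \<in> F \<and> Lv 1 = {\<nu>1} \<and>
     (2 \<le> Jt \<longrightarrow> maximal_packing \<mu> (d / c) F (off 2 \<nu>1) \<and> Lv 2 = off 2 \<nu>1) \<and>
     (\<forall>j. 3 \<le> j \<and> j \<le> Jt \<longrightarrow>
        (\<exists>P cs. (\<forall>q\<in>Lv (j - 1). maximal_packing \<mu> (d / (2^(j - 1) * c))
                                   (L2ball \<mu> q (d / 2^(j - 2)) \<inter> F) (P q))
              \<and> distinct cs \<and> set cs = {(q, u). q \<in> Lv (j - 1) \<and> u \<in> P q}
              \<and> (\<forall>q\<in>Lv (j - 1). off j q = {u. (q, u) \<in> set (merge_cands \<mu> (d / (2^(j - 1) * c)) cs)})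
              \<and> Lv j = (\<Union>q\<in>Lv (j - 1). off j q)))"

definition estimator_path :: "'a measure \<Rightarrow> nat \<Rightarrow> nat \<Rightarrow> (nat \<Rightarrow> nat set) \<Rightarrow> real \<Rightarrow> real \<Rightarrow> real
      \<Rightarrow> nat \<Rightarrow> ('a \<Rightarrow> real) \<Rightarrow> (nat \<Rightarrow> ('a \<Rightarrow> real) \<Rightarrow> ('a \<Rightarrow> real) set) \<Rightarrow> (nat \<Rightarrow> 'a)
      \<Rightarrow> (nat \<Rightarrow> ('a \<Rightarrow> real)) \<Rightarrow> bool" where
  "estimator_path \<mu> N k G C c d Jt \<nu>1 off X \<nu> \<longleftrightarrow>
     \<nu> 1 = \<nu>1 \<and>
     (\<forall>j. 2 \<le> j \<and> j \<le> Jt \<longrightarrow>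
        selected \<mu> N k G X C (d / (2^(j - 2) * c)) (off j (\<nu> (j - 1))) (\<nu> j))"

definition outer_exp :: "'b measure \<Rightarrow> ('b \<Rightarrow> real) \<Rightarrow> ennreal" where
  "outer_exp M h = (INF g\<in>{g \<in> borel_measurable M. \<forall>x\<in>space M. ennreal (h x) \<le> g x}. nn_integral M g)"

end

theory Submission
  imports Defs
begin

definition bm :: "'a measure \<Rightarrow> ('a \<Rightarrow> real) \<Rightarrow> bool" where
  "bm \<mu> h \<longleftrightarrow> h \<in> borel_measurable \<mu> \<and> (\<exists>K. \<forall>x\<in>space \<mu>. \<bar>h x\<bar> \<le> K)"

lemma bm_integrable: "prob_space \<mu> \<Longrightarrow> bm \<mu> h \<Longrightarrow> integrable \<mu> h"
proof -
  assume p: "prob_space \<mu>" and b: "bm \<mu> h"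
  then obtain K where K: "\<forall>x\<in>space \<mu>. \<bar>h x\<bar> \<le> K" and m: "h \<in> borel_measurable \<mu>" unfolding bm_def by auto
  interpret prob_space \<mu> by fact
  show ?thesis by (rule integrable_const_bound[where B=K]) (use K m in auto)
qed

lemma bm_diff: "bm \<mu> f \<Longrightarrow> bm \<mu> g \<Longrightarrow> bm \<mu> (\<lambda>x. f x - g x)"
  unfolding bm_def
proof (elim conjE exE, intro conjI)
  fix K L assume "\<forall>x\<in>space \<mu>. \<bar>f x\<bar> \<le> K" "\<forall>x\<in>space \<mu>. \<bar>g x\<bar> \<le> L"
  then show "\<exists>K. \<forall>x\<in>space \<mu>. \<bar>f x - g x\<bar> \<le> K" by (intro exI[of _ "K+L"]) force
qed auto

lemma bm_mult: "bm \<mu> f \<Longrightarrow> bm \<mu> g \<Longrightarrow> bm \<mu> (\<lambda>x. f x * g x)"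
  unfolding bm_def
proof (elim conjE exE, intro conjI)
  fix K L assume a: "\<forall>x\<in>space \<mu>. \<bar>f x\<bar> \<le> K" "\<forall>x\<in>space \<mu>. \<bar>g x\<bar> \<le> L"
  show "\<exists>K. \<forall>x\<in>space \<mu>. \<bar>f x * g x\<bar> \<le> K"
  proof (intro exI[of _ "K*L"] ballI)
    fix x assume "x \<in> space \<mu>"
    then have "\<bar>f x\<bar> \<le> K" "\<bar>g x\<bar> \<le> L" using a by auto
    then show "\<bar>f x * g x\<bar> \<le> K * L" by (simp add: abs_mult mult_mono')
  qed
qed auto

lemma bm_sq: "bm \<mu> f \<Longrightarrow> bm \<mu> (\<lambda>x. (f x)^2)"
  using bm_mult[of \<mu> f f] by (simp add: power2_eq_square)

lemma cs_int:
  assumes p: "prob_space \<mu>" and a: "bm \<mu> a" and b: "bm \<mu> b"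
  shows "integral\<^sup>L \<mu> (\<lambda>x. a x * b x) \<le> sqrt (integral\<^sup>L \<mu> (\<lambda>x. (a x)^2)) * sqrt (integral\<^sup>L \<mu> (\<lambda>x. (b x)^2))"
proof -
  define A where "A = integral\<^sup>L \<mu> (\<lambda>x. (a x)^2)"
  define Bb where "Bb = integral\<^sup>L \<mu> (\<lambda>x. (b x)^2)"
  define I where "I = integral\<^sup>L \<mu> (\<lambda>x. a x * b x)"
  have ia: "integrable \<mu> (\<lambda>x. (a x)^2)" using bm_integrable[OF p bm_sq[OF a]] .
  have ib: "integrable \<mu> (\<lambda>x. (b x)^2)" using bm_integrable[OF p bm_sq[OF b]] .
  have iab: "integrable \<mu> (\<lambda>x. a x * b x)" using bm_integrable[OF p bm_mult[OF a b]] .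
  have A0: "A \<ge> 0" unfolding A_def by (rule integral_nonneg_AE) auto
  have B0: "Bb \<ge> 0" unfolding Bb_def by (rule integral_nonneg_AE) auto
  have key: "2 * I \<le> t * A + Bb / t" if t: "t > 0" for t
  proof -
    have pw: "2 * (a x * b x) \<le> t * (a x)^2 + (b x)^2 / t" for x
    proof -
      have "0 \<le> (t * a x - b x)^2 / t" using t by simp
      also have "\<dots> = t * (a x)^2 - 2 * (a x * b x) + (b x)^2 / t"
        using t by (simp add: power2_eq_square field_simps)
      finally show ?thesis by simp
    qed
    have "integral\<^sup>L \<mu> (\<lambda>x. 2 * (a x * b x)) \<le> integral\<^sup>L \<mu> (\<lambda>x. t * (a x)^2 + (b x)^2 / t)"
      by (rule integral_mono) (use ia ib iab pw in auto)
    also have "\<dots> = t * A + Bb / t" unfolding A_def Bb_def using ia ib by simp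
    finally show ?thesis unfolding I_def by simp
  qed
  have "I \<le> sqrt A * sqrt Bb"
  proof (cases "A > 0 \<and> Bb > 0")
    case True
    define t where "t = sqrt Bb / sqrt A"
    have tp: "t > 0" using True unfolding t_def by simp
    have sA: "sqrt A * sqrt A = A" "sqrt Bb * sqrt Bb = Bb" using True by auto
    have pA: "sqrt A > 0" "sqrt Bb > 0" using True by auto
    have "t * A = sqrt A * sqrt Bb" unfolding t_def using pA
      by (metis sA(1) mult.commute nonzero_mult_div_cancel_left order_less_irrefl times_divide_eq_left)
    moreover have "Bb / t = sqrt A * sqrt Bb" unfolding t_def using pA
      by (metis sA(2) divide_divide_eq_right mult.commute nonzero_mult_div_cancel_left order_less_irrefl)
    ultimately show ?thesis using key[OF tp] by simp
  next
    case False
    then have z: "A = 0 \<or> Bb = 0" using A0 B0 by auto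
    show ?thesis
    proof (rule ccontr)
      assume "\<not> I \<le> sqrt A * sqrt Bb"
      then have Ip: "I > 0" using z by auto
      show False
      proof (cases "A = 0")
        case True
        define t where "t = (Bb + 1) / I"
        have tp: "t > 0" using Ip B0 unfolding t_def by simp
        have "Bb / t = Bb * I / (Bb + 1)" using Ip B0 unfolding t_def by simp
        also have "\<dots> < I" using Ip B0 by (simp add: field_simps)
        finally show False using key[OF tp] True Ip by simp
      next
        case False
        then have Bz: "Bb = 0" using z by simp
        define t where "t = I / (A + 1)"
        have tp: "t > 0" using Ip A0 unfolding t_def by simp
        have "t * A = I * A / (A + 1)" unfolding t_def by simp
        also have "\<dots> < I" using Ip A0 by (simp add: field_simps)
        finally show False using key[OF tp] Bz Ip by simp
      qed
    qed
  qed
  then show ?thesis unfolding I_def A_def Bb_def .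
qed

lemma L2dist_sym: "L2dist \<mu> f g = L2dist \<mu> g f"
  unfolding L2dist_def by (simp add: power2_commute)

lemma L2dist_self: "L2dist \<mu> f f = 0"
  unfolding L2dist_def by simp

lemma L2dist_nonneg: "L2dist \<mu> f g \<ge> 0"
proof -
  have "integral\<^sup>L \<mu> (\<lambda>x. (f x - g x)^2) \<ge> 0" by (rule integral_nonneg_AE) auto
  then show ?thesis unfolding L2dist_def by simp
qed

lemma L2dist_sq: "(L2dist \<mu> f g)^2 = integral\<^sup>L \<mu> (\<lambda>x. (f x - g x)^2)"
proof -
  have "integral\<^sup>L \<mu> (\<lambda>x. (f x - g x)^2) \<ge> 0" by (rule integral_nonneg_AE) auto
  then show ?thesis unfolding L2dist_def by simp
qed

lemma L2dist_triangle:
  assumes p: "prob_space \<mu>" and f: "bm \<mu> f" and g: "bm \<mu> g" and h: "bm \<mu> h"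
  shows "L2dist \<mu> f h \<le> L2dist \<mu> f g + L2dist \<mu> g h"
proof -
  define a where "a = (\<lambda>x. f x - g x)"
  define b where "b = (\<lambda>x. g x - h x)"
  have a: "bm \<mu> a" unfolding a_def by (rule bm_diff[OF f g])
  have b: "bm \<mu> b" unfolding b_def by (rule bm_diff[OF g h])
  have ia: "integrable \<mu> (\<lambda>x. (a x)^2)" using bm_integrable[OF p bm_sq[OF a]] .
  have ib: "integrable \<mu> (\<lambda>x. (b x)^2)" using bm_integrable[OF p bm_sq[OF b]] .
  have iab: "integrable \<mu> (\<lambda>x. a x * b x)" using bm_integrable[OF p bm_mult[OF a b]] .
  have "(L2dist \<mu> f h)^2 = integral\<^sup>L \<mu> (\<lambda>x. (a x)^2 + 2 * (a x * b x) + (b x)^2)"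
    unfolding L2dist_sq a_def b_def by (rule arg_cong[where f="integral\<^sup>L \<mu>"]) (auto simp: power2_eq_square algebra_simps)
  also have "\<dots> = integral\<^sup>L \<mu> (\<lambda>x. (a x)^2) + 2 * integral\<^sup>L \<mu> (\<lambda>x. a x * b x) + integral\<^sup>L \<mu> (\<lambda>x. (b x)^2)"
    using ia ib iab by simp
  also have "\<dots> \<le> (L2dist \<mu> f g)^2 + 2 * (L2dist \<mu> f g * L2dist \<mu> g h) + (L2dist \<mu> g h)^2"
    using cs_int[OF p a b] unfolding L2dist_sq a_def b_def L2dist_def[symmetric] by (simp add: L2dist_def)
  also have "\<dots> = (L2dist \<mu> f g + L2dist \<mu> g h)^2" by (simp add: power2_eq_square algebra_simps)
  finally show ?thesis using L2dist_nonneg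
    by (meson add_nonneg_nonneg power2_le_imp_le)
qed

lemma dc_bm: assumes "f \<in> dens_class \<mu> B \<alpha> \<beta>" "space \<mu> = B" "0 < \<alpha>" shows "bm \<mu> f"
  unfolding bm_def
proof (intro conjI exI[of _ \<beta>] ballI)
  show "f \<in> borel_measurable \<mu>" using assms unfolding dens_class_def by auto
  fix x assume "x \<in> space \<mu>" then show "\<bar>f x\<bar> \<le> \<beta>" using assms unfolding dens_class_def by force
qed

lemma L2dist_le_beta:
  assumes p: "prob_space \<mu>" and sp: "space \<mu> = B" and a: "0 < \<alpha>"
    and f: "f \<in> dens_class \<mu> B \<alpha> \<beta>" and g: "g \<in> dens_class \<mu> B \<alpha> \<beta>"
  shows "L2dist \<mu> f g \<le> \<beta>"
proof -
  interpret prob_space \<mu> by fact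
  have b: "\<forall>x\<in>space \<mu>. (f x - g x)^2 \<le> \<beta>^2"
  proof
    fix x assume "x \<in> space \<mu>"
    then have "\<alpha> \<le> f x" "f x \<le> \<beta>" "\<alpha> \<le> g x" "g x \<le> \<beta>" using f g sp unfolding dens_class_def by auto
    then have "\<bar>f x - g x\<bar> \<le> \<bar>\<beta>\<bar>" using a by auto
    then show "(f x - g x)^2 \<le> \<beta>^2" by (metis abs_le_square_iff)
  qed
  have "integral\<^sup>L \<mu> (\<lambda>x. (f x - g x)^2) \<le> integral\<^sup>L \<mu> (\<lambda>x. \<beta>^2)"
    by (rule integral_mono) (use bm_integrable[OF p bm_sq[OF bm_diff[OF dc_bm[OF f sp a] dc_bm[OF g sp a]]]] b in auto)
  also have "\<dots> = \<beta>^2" by (simp add: prob_space)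
  finally have "(L2dist \<mu> f g)^2 \<le> \<beta>^2" unfolding L2dist_sq .
  moreover have "\<beta> \<ge> 0"
  proof -
    obtain x where "x \<in> space \<mu>" using not_empty by blast
    then have "\<alpha> \<le> f x" "f x \<le> \<beta>" using f sp unfolding dens_class_def by auto
    then show ?thesis using a by linarith
  qed
  ultimately show ?thesis using L2dist_nonneg by (meson power2_le_imp_le)
qed

lemma L2diam_upper:
  assumes p: "prob_space \<mu>" and sp: "space \<mu> = B" and a: "0 < \<alpha>"
    and F: "F \<subseteq> dens_class \<mu> B \<alpha> \<beta>" and f: "f \<in> F" and g: "g \<in> F"
  shows "L2dist \<mu> f g \<le> L2diam \<mu> F"
proof -
  have "bdd_above ((\<lambda>p. L2dist \<mu> (fst p) (snd p)) ` (F \<times> F))"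
    by (rule bdd_aboveI[of _ \<beta>]) (use L2dist_le_beta[OF p sp a] F in force)
  then show ?thesis unfolding L2diam_def using f g
    by (metis (no_types, lifting) cSUP_upper fst_conv mem_Sigma_iff snd_conv)
qed

lemma maxpack_cover:
  assumes mp: "maximal_packing \<mu> \<eta> S P" and s: "s \<in> S" and e: "\<eta> \<ge> 0"
  shows "\<exists>p\<in>P. L2dist \<mu> p s \<le> \<eta>"
proof (rule ccontr)
  assume "\<not> ?thesis"
  then have far: "\<forall>p\<in>P. L2dist \<mu> p s > \<eta>" by auto
  have sP: "s \<notin> P" using far e L2dist_self[of \<mu> s] by force
  have "is_packing \<mu> \<eta> S (insert s P)"
    using mp far s unfolding maximal_packing_def is_packing_def
    by (auto simp: L2dist_sym)
  then have "insert s P = P" using mp unfolding maximal_packing_def by blast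
  then show False using sP by blast
qed

lemma pack_count:
  assumes g: "g \<in> F" and S: "S \<subseteq> F \<inter> L2ball \<mu> g \<tau>"
    and sep: "\<forall>u\<in>S. \<forall>v\<in>S. u \<noteq> v \<longrightarrow> L2dist \<mu> u v > \<tau> / c'"
    and M: "loc_entropy \<mu> F \<tau> c' \<noteq> \<infinity>"
  shows "finite S \<and> card S \<le> the_enat (loc_entropy \<mu> F \<tau> c')"
proof -
  have le: "enat (card P) \<le> loc_entropy \<mu> F \<tau> c'" if "P \<subseteq> S" "finite P" for P
  proof -
    have "is_packing \<mu> (\<tau> / c') (F \<inter> L2ball \<mu> g \<tau>) P" using that S sep unfolding is_packing_def by blast
    then have "enat (card P) \<le> packing_number \<mu> (\<tau> / c') (F \<inter> L2ball \<mu> g \<tau>)"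
      unfolding packing_number_def using that by (intro SUP_upper) auto
    also have "\<dots> \<le> loc_entropy \<mu> F \<tau> c'" unfolding loc_entropy_def using g by (intro SUP_upper) auto
    finally show ?thesis .
  qed
  obtain m where m: "loc_entropy \<mu> F \<tau> c' = enat m" using M by auto
  have fin: "finite S"
  proof (rule ccontr)
    assume "infinite S"
    then obtain P where "P \<subseteq> S" "finite P" "card P = Suc m" using infinite_arbitrarily_large by blast
    then show False using le[of P] m by simp
  qed
  then show ?thesis using le[of S] m by simp
qed

lemma L2dist_scale:
  assumes t: "t \<ge> 0"
  shows "L2dist \<mu> (\<lambda>x. t * u x + (1 - t) * w x) (\<lambda>x. t * v x + (1 - t) * w x) = t * L2dist \<mu> u v"
proof -
  have "(\<lambda>x. (t * u x + (1 - t) * w x - (t * v x + (1 - t) * w x))^2) = (\<lambda>x. t^2 * (u x - v x)^2)"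
    by (auto simp: power2_eq_square algebra_simps)
  then show ?thesis unfolding L2dist_def using t by (simp add: real_sqrt_mult)
qed

lemma loc_entropy_mono:
  assumes st: "star_shaped F" and t1: "0 < \<tau>'" "\<tau>' \<le> \<tau>" and c: "c' > 0"
  shows "loc_entropy \<mu> F \<tau> c' \<le> loc_entropy \<mu> F \<tau>' c'"
proof -
  obtain f0 where f0: "f0 \<in> F" and sf: "\<forall>f\<in>F. \<forall>t::real. 0 \<le> t \<and> t \<le> 1 \<longrightarrow> (\<lambda>x. t * f x + (1 - t) * f0 x) \<in> F"
    using st unfolding star_shaped_def by blast
  define t where "t = \<tau>' / \<tau>"
  have tp: "0 < t" "t \<le> 1" using t1 unfolding t_def by auto
  define T where "T = (\<lambda>h::'a\<Rightarrow>real. (\<lambda>x. t * h x + (1 - t) * f0 x))"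
  have TF: "T h \<in> F" if "h \<in> F" for h using sf that tp unfolding T_def by auto
  have Td: "L2dist \<mu> (T u) (T v) = t * L2dist \<mu> u v" for u v unfolding T_def by (rule L2dist_scale) (use tp in auto)
  show ?thesis unfolding loc_entropy_def[of _ _ \<tau>]
  proof (rule SUP_least)
    fix g assume g: "g \<in> F"
    show "packing_number \<mu> (\<tau> / c') (F \<inter> L2ball \<mu> g \<tau>) \<le> loc_entropy \<mu> F \<tau>' c'"
      unfolding packing_number_def
    proof (rule SUP_least)
      fix P assume "P \<in> {P. is_packing \<mu> (\<tau> / c') (F \<inter> L2ball \<mu> g \<tau>) P \<and> finite P}"
      then have P: "is_packing \<mu> (\<tau> / c') (F \<inter> L2ball \<mu> g \<tau>) P" "finite P" by auto
      have inj: "inj_on T P"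
      proof
        fix u v assume uv: "u \<in> P" "v \<in> P" "T u = T v"
        show "u = v"
        proof (rule ccontr)
          assume "u \<noteq> v"
          then have "L2dist \<mu> u v > \<tau> / c'" using P uv unfolding is_packing_def by auto
          moreover have "\<tau> / c' > 0" using t1 c by auto
          moreover have "t * L2dist \<mu> u v = 0" using Td[of u v] uv(3) L2dist_self by metis
          ultimately show False using tp by auto
        qed
      qed
      have pk: "is_packing \<mu> (\<tau>' / c') (F \<inter> L2ball \<mu> (T g) \<tau>') (T ` P)"
        unfolding is_packing_def
      proof (intro conjI ballI impI subsetI)
        fix y assume "y \<in> T ` P"
        then obtain h where h: "h \<in> P" "y = T h" by auto
        then have "h \<in> F" "L2dist \<mu> g h \<le> \<tau>" using P unfolding is_packing_def L2ball_def by auto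
        moreover have "t * L2dist \<mu> g h \<le> t * \<tau>" using tp calculation(2) by (simp add: mult_left_mono)
        moreover have "t * \<tau> = \<tau>'" unfolding t_def using t1 by simp
        ultimately show "y \<in> F \<inter> L2ball \<mu> (T g) \<tau>'" using h TF Td[of g h] unfolding L2ball_def by auto
      next
        fix y z assume "y \<in> T ` P" "z \<in> T ` P" "y \<noteq> z"
        then obtain u v where uv: "u \<in> P" "v \<in> P" "y = T u" "z = T v" "u \<noteq> v" by auto
        then have "L2dist \<mu> u v > \<tau> / c'" using P unfolding is_packing_def by auto
        then have A: "t * L2dist \<mu> u v > t * (\<tau> / c')" using tp by (simp only: mult_strict_left_mono)
        have e: "t * (\<tau> / c') = \<tau>' / c'" unfolding t_def using t1 by simp
        have "L2dist \<mu> y z = t * L2dist \<mu> u v" using uv Td by simp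
        then show "L2dist \<mu> y z > \<tau>' / c'" using A e by linarith
      qed
      have "enat (card P) = enat (card (T ` P))" using card_image[OF inj] by simp
      also have "\<dots> \<le> packing_number \<mu> (\<tau>' / c') (F \<inter> L2ball \<mu> (T g) \<tau>')"
        unfolding packing_number_def using pk P by (intro SUP_upper) auto
      also have "\<dots> \<le> loc_entropy \<mu> F \<tau>' c'" unfolding loc_entropy_def using TF[OF g] by (intro SUP_upper) auto
      finally show "enat (card P) \<le> loc_entropy \<mu> F \<tau>' c'" .
    qed
  qed
qed

lemma merge_mset: "mset (map fst (merge_cands \<mu> \<eta> xs)) = mset (map fst xs)"
proof (induction \<mu> \<eta> xs rule: merge_cands.induct)
  case (1 \<mu> \<eta>) then show ?case by simp
next
  case (2 \<mu> \<eta> q u rest)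
  have "mset (map fst rest) = mset (map fst (filter (\<lambda>p. L2dist \<mu> u (snd p) \<le> \<eta>) rest))
        + mset (map fst (filter (\<lambda>p. \<not> L2dist \<mu> u (snd p) \<le> \<eta>) rest))"
    by (induction rest) auto
  then show ?case using 2 by (simp add: o_def)
qed

lemma merge_snd: "snd ` set (merge_cands \<mu> \<eta> xs) \<subseteq> snd ` set xs"
proof (induction \<mu> \<eta> xs rule: merge_cands.induct)
  case (1 \<mu> \<eta>) then show ?case by simp
next
  case (2 \<mu> \<eta> q u rest)
  then show ?case by (auto simp: image_iff)
qed

lemma merge_from:
  assumes "p \<in> set xs" "\<eta> \<ge> 0"
  shows "\<exists>u. (fst p, u) \<in> set (merge_cands \<mu> \<eta> xs) \<and> L2dist \<mu> u (snd p) \<le> \<eta>"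
  using assms
proof (induction \<mu> \<eta> xs rule: merge_cands.induct)
  case (1 \<mu> \<eta>) then show ?case by simp
next
  case (2 \<mu> \<eta> q u rest)
  show ?case
  proof (cases "p = (q, u)")
    case True then show ?thesis using 2(3) by (auto simp: L2dist_self)
  next
    case False
    then have pr: "p \<in> set rest" using 2(2) by auto
    show ?thesis
    proof (cases "L2dist \<mu> u (snd p) \<le> \<eta>")
      case True
      then have "(fst p, u) \<in> set (merge_cands \<mu> \<eta> ((q, u) # rest))" using pr by force
      then show ?thesis using True by blast
    next
      case False
      then have "p \<in> set (filter (\<lambda>p. \<not> L2dist \<mu> u (snd p) \<le> \<eta>) rest)" using pr by auto
      from 2(1)[OF this 2(3)] show ?thesis by auto
    qed
  qed
qed

lemma merge_to:
  assumes "p \<in> set (merge_cands \<mu> \<eta> xs)" "\<eta> \<ge> 0"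
  shows "\<exists>p'\<in>set xs. fst p' = fst p \<and> L2dist \<mu> (snd p) (snd p') \<le> \<eta>"
  using assms
proof (induction \<mu> \<eta> xs rule: merge_cands.induct)
  case (1 \<mu> \<eta>) then show ?case by simp
next
  case (2 \<mu> \<eta> q u rest)
  from 2(2) consider "p = (q, u)" | "p \<in> set (map (\<lambda>p. (fst p, u)) (filter (\<lambda>p. L2dist \<mu> u (snd p) \<le> \<eta>) rest))"
    | "p \<in> set (merge_cands \<mu> \<eta> (filter (\<lambda>p. \<not> L2dist \<mu> u (snd p) \<le> \<eta>) rest))" by auto
  then show ?case
  proof cases
    case 1 then show ?thesis using 2(3) by (auto simp: L2dist_self)
  next
    case 2
    then obtain p' where "p' \<in> set rest" "L2dist \<mu> u (snd p') \<le> \<eta>" "p = (fst p', u)" by auto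
    then show ?thesis by (intro bexI[of _ "p'"]) auto
  next
    case 3 from "2.IH"[OF this "2.prems"(2)] obtain p' where
      "p' \<in> set (filter (\<lambda>p. \<not> L2dist \<mu> u (snd p) \<le> \<eta>) rest)" "fst p' = fst p" "L2dist \<mu> (snd p) (snd p') \<le> \<eta>" by blast
    then show ?thesis by (intro bexI[of _ "p'"]) auto
  qed
qed

lemma merge_sep:
  assumes "p1 \<in> set (merge_cands \<mu> \<eta> xs)" "p2 \<in> set (merge_cands \<mu> \<eta> xs)" "snd p1 \<noteq> snd p2"
  shows "L2dist \<mu> (snd p1) (snd p2) > \<eta>"
  using assms
proof (induction \<mu> \<eta> xs arbitrary: p1 p2 rule: merge_cands.induct)
  case (1 \<mu> \<eta>) then show ?case by simp
next
  case (2 \<mu> \<eta> q u rest)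
  define far where "far = filter (\<lambda>p. \<not> L2dist \<mu> u (snd p) \<le> \<eta>) rest"
  have A: "p \<in> set (merge_cands \<mu> \<eta> ((q, u) # rest)) \<Longrightarrow> snd p = u \<or> p \<in> set (merge_cands \<mu> \<eta> far)" for p
    unfolding far_def by auto
  have B: "p \<in> set (merge_cands \<mu> \<eta> far) \<Longrightarrow> L2dist \<mu> u (snd p) > \<eta>" for p
  proof -
    assume "p \<in> set (merge_cands \<mu> \<eta> far)"
    then have "snd p \<in> snd ` set far" using merge_snd by blast
    then show ?thesis unfolding far_def by auto
  qed
  from A[OF "2.prems"(1)] A[OF "2.prems"(2)] show ?case
  proof (elim disjE)
    assume "snd p1 = u" "snd p2 = u" then show ?thesis using "2.prems"(3) by simp
  next
    assume "snd p1 = u" "p2 \<in> set (merge_cands \<mu> \<eta> far)" then show ?thesis using B by simp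
  next
    assume "p1 \<in> set (merge_cands \<mu> \<eta> far)" "snd p2 = u" then show ?thesis using B[of p1] by (simp add: L2dist_sym)
  next
    assume "p1 \<in> set (merge_cands \<mu> \<eta> far)" "p2 \<in> set (merge_cands \<mu> \<eta> far)"
    then show ?thesis using "2.IH"[of p1 p2] "2.prems"(3) unfolding far_def by simp
  qed
qed

lemma merge_card:
  "card {u. (q, u) \<in> set (merge_cands \<mu> \<eta> xs)} \<le> length (filter (\<lambda>p. fst p = q) xs)"
proof -
  define ys where "ys = merge_cands \<mu> \<eta> xs"
  have "{u. (q, u) \<in> set ys} = snd ` set (filter (\<lambda>p. fst p = q) ys)" by force
  then have "card {u. (q, u) \<in> set ys} \<le> card (set (filter (\<lambda>p. fst p = q) ys))"
    by (simp add: card_image_le)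
  also have "\<dots> \<le> length (filter (\<lambda>p. fst p = q) ys)" by (rule card_length)
  also have "\<dots> = count (mset (map fst ys)) q" by (induction ys) auto
  also have "\<dots> = count (mset (map fst xs)) q" unfolding ys_def merge_mset ..
  also have "\<dots> = length (filter (\<lambda>p. fst p = q) xs)" by (induction xs) auto
  finally show ?thesis unfolding ys_def .
qed

locale tctx =
  fixes \<mu> :: "'a measure" and F B \<alpha> \<beta> d c \<nu>1 Jt Lv off
  assumes ps: "prob_space \<mu>" and sp: "space \<mu> = B" and ap: "0 < \<alpha>"
    and Fd: "F \<subseteq> dens_class \<mu> B \<alpha> \<beta>" and dd: "d = L2diam \<mu> F" and cp: "c > 0"
    and vt: "valid_tree \<mu> F d c \<nu>1 Jt Lv off"
begin

lemma F_bm: "g \<in> F \<Longrightarrow> bm \<mu> g" using dc_bm[OF _ sp ap] Fd by blast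

lemma F_diam: "g \<in> F \<Longrightarrow> h \<in> F \<Longrightarrow> L2dist \<mu> g h \<le> d"
  using L2diam_upper[OF ps sp ap Fd] dd by blast

lemma tri: "f \<in> F \<Longrightarrow> g \<in> F \<Longrightarrow> h \<in> F \<Longrightarrow> L2dist \<mu> f h \<le> L2dist \<mu> f g + L2dist \<mu> g h"
  using L2dist_triangle[OF ps] F_bm by blast

lemma d_nonneg: "d \<ge> 0"
proof -
  have "\<nu>1 \<in> F" using vt unfolding valid_tree_def by auto
  then show ?thesis using F_diam[of \<nu>1 \<nu>1] by (simp add: L2dist_self)
qed

lemma nu1F: "\<nu>1 \<in> F" and Lv1: "Lv 1 = {\<nu>1}" using vt unfolding valid_tree_def by auto

lemma lev2: "2 \<le> Jt \<Longrightarrow> maximal_packing \<mu> (d / c) F (off 2 \<nu>1) \<and> Lv 2 = off 2 \<nu>1"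
  using vt unfolding valid_tree_def by auto

lemma levj: "3 \<le> j \<Longrightarrow> j \<le> Jt \<Longrightarrow>
        (\<exists>P cs. (\<forall>q\<in>Lv (j - 1). maximal_packing \<mu> (d / (2^(j - 1) * c))
                                   (L2ball \<mu> q (d / 2^(j - 2)) \<inter> F) (P q))
              \<and> distinct cs \<and> set cs = {(q, u). q \<in> Lv (j - 1) \<and> u \<in> P q}
              \<and> (\<forall>q\<in>Lv (j - 1). off j q = {u. (q, u) \<in> set (merge_cands \<mu> (d / (2^(j - 1) * c)) cs)})
              \<and> Lv j = (\<Union>q\<in>Lv (j - 1). off j q))"
  using vt unfolding valid_tree_def by auto

lemma pow_j: "2 \<le> j \<Longrightarrow> (2::real)^(j - 1) = 2 * 2^(j - 2)"
  by (cases j; cases "j - 1") auto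

lemma Lv_off_F: "(1 \<le> j \<longrightarrow> j \<le> Jt \<longrightarrow> Lv j \<subseteq> F) \<and> (2 \<le> j \<longrightarrow> j \<le> Jt \<longrightarrow> (\<forall>q\<in>Lv (j - 1). off j q \<subseteq> F))"
proof (cases "j \<ge> 3")
  case True
  show ?thesis
  proof (intro conjI impI)
    assume "j \<le> Jt"
    from levj[OF True this] obtain P cs where P: "\<forall>q\<in>Lv (j - 1). maximal_packing \<mu> (d / (2^(j - 1) * c))
                                   (L2ball \<mu> q (d / 2^(j - 2)) \<inter> F) (P q)"
      and cs: "set cs = {(q, u). q \<in> Lv (j - 1) \<and> u \<in> P q}"
      and off: "\<forall>q\<in>Lv (j - 1). off j q = {u. (q, u) \<in> set (merge_cands \<mu> (d / (2^(j - 1) * c)) cs)}"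
      and L: "Lv j = (\<Union>q\<in>Lv (j - 1). off j q)" by blast
    have "\<forall>q\<in>Lv (j - 1). P q \<subseteq> F" using P unfolding maximal_packing_def is_packing_def by blast
    then have "snd ` set cs \<subseteq> F" using cs by force
    then have sub: "q \<in> Lv (j - 1) \<Longrightarrow> off j q \<subseteq> F" for q using off merge_snd[of \<mu> "d / (2^(j - 1) * c)" cs]
      by force
    show "\<forall>q\<in>Lv (j - 1). off j q \<subseteq> F" using sub by blast
    show "Lv j \<subseteq> F" using sub L by blast
  qed
next
  case False
  then consider "j = 0" | "j = 1" | "j = 2" by linarith
  then show ?thesis
  proof cases
    case 3
    show ?thesis
    proof (intro conjI impI)
      assume "j \<le> Jt"
      then have "maximal_packing \<mu> (d / c) F (off 2 \<nu>1) \<and> Lv 2 = off 2 \<nu>1" using lev2 3 by auto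
      then have "off 2 \<nu>1 \<subseteq> F" "Lv 2 = off 2 \<nu>1" unfolding maximal_packing_def is_packing_def by auto
      then show "Lv j \<subseteq> F" "\<forall>q\<in>Lv (j - 1). off j q \<subseteq> F" using 3 Lv1 by auto
    qed
  qed (use Lv1 nu1F in auto)
qed

lemma Lv_F: "1 \<le> j \<Longrightarrow> j \<le> Jt \<Longrightarrow> Lv j \<subseteq> F" using Lv_off_F by blast
lemma off_F: "2 \<le> j \<Longrightarrow> j \<le> Jt \<Longrightarrow> q \<in> Lv (j - 1) \<Longrightarrow> off j q \<subseteq> F" using Lv_off_F by blast

lemma off_Lv: "2 \<le> j \<Longrightarrow> j \<le> Jt \<Longrightarrow> q \<in> Lv (j - 1) \<Longrightarrow> off j q \<subseteq> Lv j"
proof -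
  assume j: "2 \<le> j" "j \<le> Jt" "q \<in> Lv (j - 1)"
  show ?thesis
  proof (cases "j = 2")
    case True then show ?thesis using lev2 j Lv1 by auto
  next
    case False
    then have "3 \<le> j" using j by auto
    from levj[OF this j(2)] show ?thesis using j(3) by blast
  qed
qed

lemma off_near:
  assumes j: "3 \<le> j" "j \<le> Jt" and q: "q \<in> Lv (j - 1)" and u: "u \<in> off j q"
  shows "L2dist \<mu> q u \<le> d / 2^(j - 2) + d / (2^(j - 1) * c)"
proof -
  from levj[OF j] obtain P cs where P: "\<forall>q\<in>Lv (j - 1). maximal_packing \<mu> (d / (2^(j - 1) * c))
                                   (L2ball \<mu> q (d / 2^(j - 2)) \<inter> F) (P q)"
      and cs: "set cs = {(q, u). q \<in> Lv (j - 1) \<and> u \<in> P q}"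
      and off: "\<forall>q\<in>Lv (j - 1). off j q = {u. (q, u) \<in> set (merge_cands \<mu> (d / (2^(j - 1) * c)) cs)}"
    by blast
  have e: "d / (2^(j - 1) * c) \<ge> 0" using d_nonneg cp by simp
  have "(q, u) \<in> set (merge_cands \<mu> (d / (2^(j - 1) * c)) cs)" using off q u by auto
  from merge_to[OF this e] obtain p' where p': "p' \<in> set cs" "fst p' = q" "L2dist \<mu> u (snd p') \<le> d / (2^(j - 1) * c)"
    by auto
  then have sP: "snd p' \<in> P q" using cs by auto
  then have 1: "L2dist \<mu> q (snd p') \<le> d / 2^(j - 2)" and sF: "snd p' \<in> F"
    using P q unfolding maximal_packing_def is_packing_def L2ball_def by auto
  have "1 \<le> j - 1" "j - 1 \<le> Jt" using j by auto
  then have qF: "q \<in> F" using Lv_F[of "j - 1"] q by auto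
  have uF: "u \<in> F" using off_F[of j q] j q u by auto
  have "L2dist \<mu> q u \<le> L2dist \<mu> q (snd p') + L2dist \<mu> (snd p') u" using tri[OF qF sF uF] .
  then show ?thesis using 1 p'(3) by (simp add: L2dist_sym)
qed

lemma off_good:
  assumes j: "2 \<le> j" "j \<le> Jt" and q: "q \<in> Lv (j - 1)" and f: "f \<in> F" and qf: "L2dist \<mu> q f \<le> d / 2^(j - 2)"
  shows "\<exists>u\<in>off j q. L2dist \<mu> u f \<le> d / (2^(j - 2) * c)"
proof (cases "j = 2")
  case True
  then have mp: "maximal_packing \<mu> (d / c) F (off 2 \<nu>1)" and q1: "q = \<nu>1" using lev2 j q Lv1 by auto
  have "d / c \<ge> 0" using d_nonneg cp by simp
  from maxpack_cover[OF mp f this] show ?thesis using True q1 by simp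
next
  case False
  then have j3: "3 \<le> j" using j by auto
  from levj[OF j3 j(2)] obtain P cs where P: "\<forall>q\<in>Lv (j - 1). maximal_packing \<mu> (d / (2^(j - 1) * c))
                                   (L2ball \<mu> q (d / 2^(j - 2)) \<inter> F) (P q)"
      and cs: "set cs = {(q, u). q \<in> Lv (j - 1) \<and> u \<in> P q}"
      and off: "\<forall>q\<in>Lv (j - 1). off j q = {u. (q, u) \<in> set (merge_cands \<mu> (d / (2^(j - 1) * c)) cs)}"
    by blast
  have e: "d / (2^(j - 1) * c) \<ge> 0" using d_nonneg cp by simp
  have "f \<in> L2ball \<mu> q (d / 2^(j - 2)) \<inter> F" using f qf unfolding L2ball_def by auto
  from maxpack_cover[OF P[rule_format, OF q] this e] obtain u' where u': "u' \<in> P q" "L2dist \<mu> u' f \<le> d / (2^(j - 1) * c)"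
    by blast
  have "(q, u') \<in> set cs" using cs q u' by auto
  from merge_from[OF this e] obtain u where u: "(q, u) \<in> set (merge_cands \<mu> (d / (2^(j - 1) * c)) cs)"
    "L2dist \<mu> u u' \<le> d / (2^(j - 1) * c)" by auto
  have uo: "u \<in> off j q" using off q u by auto
  have uF: "u \<in> F" using off_F[of j q] j q uo by auto
  have u'F: "u' \<in> F" using P q u' unfolding maximal_packing_def is_packing_def by auto
  have "L2dist \<mu> u f \<le> 2 * (d / (2^(j - 1) * c))" using tri[OF uF u'F f] u u' by simp
  also have "\<dots> = d / (2^(j - 2) * c)" using pow_j[of j] j cp by simp
  finally show ?thesis using uo by blast
qed

lemma Lv_sep:
  assumes j: "2 \<le> j" "j \<le> Jt" and uv: "u \<in> Lv j" "v \<in> Lv j" "u \<noteq> v"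
  shows "L2dist \<mu> u v > d / (2^(j - 1) * c)"
proof (cases "j = 2")
  case True
  then have mp: "maximal_packing \<mu> (d / c) F (off 2 \<nu>1)" "Lv 2 = off 2 \<nu>1" using lev2 j by auto
  then have "L2dist \<mu> u v > d / c" using uv True unfolding maximal_packing_def is_packing_def by auto
  moreover have "d / (2^(j - 1) * c) \<le> d / c" using True d_nonneg cp by (simp add: divide_le_cancel frac_le)
  ultimately show ?thesis by linarith
next
  case False
  then have j3: "3 \<le> j" using j by auto
  from levj[OF j3 j(2)] obtain P cs where
      off: "\<forall>q\<in>Lv (j - 1). off j q = {u. (q, u) \<in> set (merge_cands \<mu> (d / (2^(j - 1) * c)) cs)}"
      and L: "Lv j = (\<Union>q\<in>Lv (j - 1). off j q)"
    by blast
  obtain q1 where "q1 \<in> Lv (j - 1)" "u \<in> off j q1" using uv L by auto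
  then have 1: "(q1, u) \<in> set (merge_cands \<mu> (d / (2^(j - 1) * c)) cs)" using off by auto
  obtain q2 where "q2 \<in> Lv (j - 1)" "v \<in> off j q2" using uv L by auto
  then have 2: "(q2, v) \<in> set (merge_cands \<mu> (d / (2^(j - 1) * c)) cs)" using off by auto
  show ?thesis using merge_sep[OF 1 2] uv by simp
qed

lemma off_card:
  assumes j: "2 \<le> j" "j \<le> Jt" and q: "q \<in> Lv (j - 1)"
    and M: "loc_entropy \<mu> F (d / 2^(j - 2)) (2 * c) \<noteq> \<infinity>"
  shows "finite (off j q) \<and> card (off j q) \<le> the_enat (loc_entropy \<mu> F (d / 2^(j - 2)) (2 * c))"
proof (cases "j = 2")
  case True
  then have mp: "maximal_packing \<mu> (d / c) F (off 2 \<nu>1)" and q1: "q = \<nu>1" using lev2 j q Lv1 by auto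
  have sub: "off 2 \<nu>1 \<subseteq> F \<inter> L2ball \<mu> \<nu>1 d" using mp F_diam nu1F unfolding maximal_packing_def is_packing_def L2ball_def
    by auto
  have "d / (2 * c) \<le> d / c" using d_nonneg cp by (simp add: frac_le)
  then have sep: "\<forall>u\<in>off 2 \<nu>1. \<forall>v\<in>off 2 \<nu>1. u \<noteq> v \<longrightarrow> L2dist \<mu> u v > d / (2 * c)"
    using mp unfolding maximal_packing_def is_packing_def by force
  from pack_count[OF nu1F sub _ ] sep M True q1 show ?thesis by simp
next
  case False
  then have j3: "3 \<le> j" using j by auto
  from levj[OF j3 j(2)] obtain P cs where P: "\<forall>q\<in>Lv (j - 1). maximal_packing \<mu> (d / (2^(j - 1) * c))
                                   (L2ball \<mu> q (d / 2^(j - 2)) \<inter> F) (P q)"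
      and dcs: "distinct cs"
      and cs: "set cs = {(q, u). q \<in> Lv (j - 1) \<and> u \<in> P q}"
      and off: "\<forall>q\<in>Lv (j - 1). off j q = {u. (q, u) \<in> set (merge_cands \<mu> (d / (2^(j - 1) * c)) cs)}"
    by blast
  have "1 \<le> j - 1" "j - 1 \<le> Jt" using j by auto
  then have qF: "q \<in> F" using Lv_F[of "j - 1"] q by auto
  have ee: "d / (2 ^ (j - 1) * c) = d / 2^(j - 2) / (2 * c)" using pow_j[of j] j by simp
  have Pq: "maximal_packing \<mu> (d / (2^(j - 1) * c)) (L2ball \<mu> q (d / 2^(j - 2)) \<inter> F) (P q)" using P q by blast
  then have sub: "P q \<subseteq> F \<inter> L2ball \<mu> q (d / 2^(j - 2))" unfolding maximal_packing_def is_packing_def by auto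
  have sep: "\<forall>u\<in>P q. \<forall>v\<in>P q. u \<noteq> v \<longrightarrow> L2dist \<mu> u v > d / 2^(j - 2) / (2 * c)"
    using Pq unfolding maximal_packing_def is_packing_def ee by blast
  from pack_count[OF qF sub sep M] have Pc: "card (P q) \<le> the_enat (loc_entropy \<mu> F (d / 2^(j - 2)) (2 * c))" by simp
  have fin: "finite (off j q)"
  proof -
    have "off j q \<subseteq> snd ` set (merge_cands \<mu> (d / (2^(j - 1) * c)) cs)" using off q by force
    then show ?thesis by (rule finite_subset) simp
  qed
  have "card (off j q) \<le> length (filter (\<lambda>p. fst p = q) cs)" using merge_card off q by metis
  also have "\<dots> = card (set (filter (\<lambda>p. fst p = q) cs))" using distinct_card[OF distinct_filter[OF dcs], of "\<lambda>p. fst p = q"] by simp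
  also have "set (filter (\<lambda>p. fst p = q) cs) = (\<lambda>u. (q, u)) ` P q" using cs q by auto
  also have "card \<dots> \<le> card (P q)" by (rule card_image_le) (use pack_count[OF qF sub sep M] in simp)
  finally show ?thesis using fin Pc by simp
qed

lemma Q_card:
  assumes j: "2 \<le> j" "j - 1 \<le> Jt" and f: "f \<in> F"
    and M: "loc_entropy \<mu> F (d / 2^(j - 2)) (2 * c) \<noteq> \<infinity>"
  shows "finite (Lv (j - 1) \<inter> L2ball \<mu> f (d / 2^(j - 2))) \<and>
         card (Lv (j - 1) \<inter> L2ball \<mu> f (d / 2^(j - 2))) \<le> the_enat (loc_entropy \<mu> F (d / 2^(j - 2)) (2 * c))"
proof -
  have sub: "Lv (j - 1) \<inter> L2ball \<mu> f (d / 2^(j - 2)) \<subseteq> F \<inter> L2ball \<mu> f (d / 2^(j - 2))"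
  proof -
    have "1 \<le> j - 1" using j by auto
    then show ?thesis using Lv_F[of "j - 1"] j by auto
  qed
  have sep: "\<forall>u\<in>Lv (j - 1) \<inter> L2ball \<mu> f (d / 2^(j - 2)). \<forall>v\<in>Lv (j - 1) \<inter> L2ball \<mu> f (d / 2^(j - 2)).
      u \<noteq> v \<longrightarrow> L2dist \<mu> u v > d / 2^(j - 2) / (2 * c)"
  proof (cases "j = 2")
    case True then show ?thesis using Lv1 by auto
  next
    case False
    then have j3: "2 \<le> j - 1" using j by auto
    have e: "d / 2^(j - 2) / (2 * c) \<le> d / (2^(j - 1 - 1) * c)"
    proof -
      have "j - 1 - 1 = j - 2" by simp
      moreover have "d / 2^(j - 2) / (2 * c) \<le> d / (2^(j - 2) * c)"
        using d_nonneg cp by (simp add: frac_le)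
      ultimately show ?thesis by simp
    qed
    show ?thesis using Lv_sep[OF j3 j(2)] e by (smt (verit) Int_iff)
  qed
  from pack_count[OF f sub sep M] show ?thesis .
qed

end

lemma sel_good:
  assumes fin: "finite U" and us: "us \<in> U" and Cd: "C * \<delta> > 0"
    and good: "\<forall>v\<in>U. L2dist \<mu> us v \<ge> C * \<delta> \<longrightarrow> psi N k G X us v \<and> \<not> psi N k G X v us"
    and sel: "selected \<mu> N k G X C \<delta> U w"
  shows "L2dist \<mu> w us < C * \<delta>"
proof (rule ccontr)
  assume "\<not> ?thesis"
  then have far: "L2dist \<mu> w us \<ge> C * \<delta>" by simp
  have wU: "w \<in> U" and le: "Tval \<mu> N k G X C \<delta> U w \<le> Tval \<mu> N k G X C \<delta> U us" using sel us unfolding selected_def by auto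
  have "{L2dist \<mu> us v | v. v \<in> U \<and> prec N k G X us v \<and> L2dist \<mu> us v \<ge> C * \<delta>} = {}"
    using good unfolding prec_def by auto
  then have T0: "Tval \<mu> N k G X C \<delta> U us = 0" unfolding Tval_def by (simp only: Un_empty_left Max_singleton)
  have mem: "L2dist \<mu> w us \<in> {L2dist \<mu> w v | v. v \<in> U \<and> prec N k G X w v \<and> L2dist \<mu> w v \<ge> C * \<delta>} \<union> {0}"
  proof -
    have "L2dist \<mu> us w \<ge> C * \<delta>" using far L2dist_sym[of \<mu> w us] by simp
    then have "prec N k G X w us" using good wU unfolding prec_def by blast
    then show ?thesis using us far by blast
  qed
  have "finite ({L2dist \<mu> w v | v. v \<in> U \<and> prec N k G X w v \<and> L2dist \<mu> w v \<ge> C * \<delta>} \<union> {0})"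
    using fin by auto
  then have "L2dist \<mu> w us \<le> Tval \<mu> N k G X C \<delta> U w" unfolding Tval_def using mem by (rule Max_ge)
  then show False using le T0 far Cd by linarith
qed

definition good :: "nat \<Rightarrow> nat \<Rightarrow> (nat \<Rightarrow> nat set) \<Rightarrow> (nat \<Rightarrow> 'a) \<Rightarrow> ('a \<Rightarrow> real) \<Rightarrow> ('a \<Rightarrow> real) \<Rightarrow> bool" where
  "good N k G X u v \<longleftrightarrow> real (card {g \<in> {..<N div k}. (\<Sum>i\<in>G g. ln (u (X i) / v (X i))) > 0}) > real N / (2 * real k)"

lemma good_psi:
  assumes k: "0 < k" "k dvd N" and pos: "\<forall>g<N div k. \<forall>i\<in>G g. u (X i) > 0 \<and> v (X i) > 0"
    and gd: "good N k G X u v"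
  shows "psi N k G X u v \<and> \<not> psi N k G X v u"
proof -
  define A where "A = {g \<in> {..<N div k}. (\<Sum>i\<in>G g. ln (u (X i) / v (X i))) > 0}"
  define A' where "A' = {g \<in> {..<N div k}. (\<Sum>i\<in>G g. ln (v (X i) / u (X i))) > 0}"
  have neg: "(\<Sum>i\<in>G g. ln (v (X i) / u (X i))) = - (\<Sum>i\<in>G g. ln (u (X i) / v (X i)))" if "g < N div k" for g
  proof -
    have "(\<Sum>i\<in>G g. ln (v (X i) / u (X i))) = (\<Sum>i\<in>G g. - ln (u (X i) / v (X i)))"
      using pos that by (intro sum.cong) (auto simp: ln_div)
    then show ?thesis by (simp add: sum_negf)
  qed
  have disj: "A \<inter> A' = {}" unfolding A_def A'_def using neg by auto
  have "card A + card A' = card (A \<union> A')" using disj by (simp add: card_Un_disjoint A_def A'_def)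
  also have "\<dots> \<le> N div k" by (rule order_trans[OF card_mono[of "{..<N div k}"]]) (auto simp: A_def A'_def)
  finally have cs: "real (card A) + real (card A') \<le> real (N div k)" by linarith
  have m: "real (N div k) = real N / real k" using k by (simp add: real_of_nat_div)
  have "real (card A) > real N / (2 * real k)" using gd unfolding good_def A_def .
  then have "real (card A') < real N / (2 * real k)" using cs m k by (simp add: field_simps)
  moreover have "real (card A) \<ge> real N / (2 * real k)" using gd unfolding good_def A_def by simp
  ultimately show ?thesis unfolding psi_def A_def A'_def by simp
qed

definition ustarG :: "'a measure \<Rightarrow> (nat \<Rightarrow> ('a \<Rightarrow> real) \<Rightarrow> ('a \<Rightarrow> real) set) \<Rightarrow> ('a \<Rightarrow> real) \<Rightarrow> real \<Rightarrow> real \<Rightarrow> nat \<Rightarrow> ('a \<Rightarrow> real) \<Rightarrow> ('a \<Rightarrow> real)" where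
  "ustarG \<mu> off f d c j q = (SOME u. u \<in> off j q \<and> L2dist \<mu> u f \<le> d / (2^(j - 2) * c))"

locale pctx = tctx \<mu> F B \<alpha> \<beta> d c \<nu>1 Jt Lv off
  for \<mu> :: "'a measure" and F B \<alpha> \<beta> d c \<nu>1 Jt Lv off +
  fixes f N k G X \<nu> J1
  assumes fF: "f \<in> F" and c2: "c \<ge> 4" and dpos: "d > 0"
    and J1: "1 \<le> J1" "J1 \<le> Jt"
    and Mfin: "\<forall>j. 2 \<le> j \<and> j \<le> J1 \<longrightarrow> loc_entropy \<mu> F (d / 2^(j - 2)) (2 * c) \<noteq> \<infinity>"
    and k: "0 < k" "k dvd N"
    and XB: "\<forall>i<N. X i \<in> B" and GN: "\<forall>g<N div k. G g \<subseteq> {..<N}"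
    and path: "estimator_path \<mu> N k G (c / 2 - 1) c d Jt \<nu>1 off X \<nu>"
begin

abbreviation ustar :: "nat \<Rightarrow> ('a \<Rightarrow> real) \<Rightarrow> ('a \<Rightarrow> real)" where
  "ustar \<equiv> ustarG \<mu> off f d c"

definition fail :: "nat \<Rightarrow> bool" where
  "fail j \<longleftrightarrow> (\<exists>q \<in> Lv (j - 1) \<inter> L2ball \<mu> f (d / 2^(j - 2)). \<exists>v\<in>off j q.
      L2dist \<mu> (ustar j q) v \<ge> (c / 2 - 1) * (d / (2^(j - 2) * c)) \<and> \<not> good N k G X (ustar j q) v)"

lemma nu_Lv: "1 \<le> j \<Longrightarrow> j \<le> Jt \<Longrightarrow> \<nu> j \<in> Lv j"
proof (induction j rule: nat_induct_at_least)
  case base then show ?case using path Lv1 unfolding estimator_path_def by auto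
next
  case (Suc n)
  have "2 \<le> Suc n" "Suc n \<le> Jt" using Suc by auto
  then have sel: "selected \<mu> N k G X (c / 2 - 1) (d / (2^(Suc n - 2) * c)) (off (Suc n) (\<nu> (Suc n - 1))) (\<nu> (Suc n))"
    using path unfolding estimator_path_def by blast
  then have "\<nu> (Suc n) \<in> off (Suc n) (\<nu> n)" unfolding selected_def by simp
  moreover have "\<nu> n \<in> Lv (Suc n - 1)" using Suc by auto
  ultimately show ?case using off_Lv[of "Suc n" "\<nu> n"] Suc by auto
qed

lemma nu_F: "1 \<le> j \<Longrightarrow> j \<le> Jt \<Longrightarrow> \<nu> j \<in> F" using nu_Lv Lv_F by blast

lemma step_bound:
  assumes j: "2 \<le> j" "j \<le> Jt"
  shows "L2dist \<mu> (\<nu> (j - 1)) (\<nu> j) \<le> 2 * d / 2^(j - 2)"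
proof -
  have sel: "selected \<mu> N k G X (c / 2 - 1) (d / (2^(j - 2) * c)) (off j (\<nu> (j - 1))) (\<nu> j)"
    using path j unfolding estimator_path_def by auto
  then have o: "\<nu> j \<in> off j (\<nu> (j - 1))" unfolding selected_def by simp
  have q: "\<nu> (j - 1) \<in> Lv (j - 1)" using nu_Lv[of "j - 1"] j by auto
  show ?thesis
  proof (cases "j = 2")
    case True
    have "L2dist \<mu> (\<nu> (j - 1)) (\<nu> j) \<le> d" using F_diam nu_F j True by auto
    then show ?thesis using True dpos by simp
  next
    case False
    then have j3: "3 \<le> j" using j by auto
    have "L2dist \<mu> (\<nu> (j - 1)) (\<nu> j) \<le> d / 2^(j - 2) + d / (2^(j - 1) * c)" using off_near[OF j3 j(2) q o] .
    also have "d / (2^(j - 1) * c) \<le> d / 2^(j - 2)"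
    proof -
      have "d / (2^(j - 1) * c) = d / 2^(j - 2) / (2 * c)" using pow_j[of j] j by simp
      also have "\<dots> \<le> d / 2^(j - 2)" using c2 dpos by (simp add: divide_le_cancel field_simps)
      finally show ?thesis .
    qed
    finally show ?thesis by simp
  qed
qed

lemma drift:
  assumes j0: "1 \<le> j0" and i: "j0 \<le> i" "i \<le> Jt"
  shows "L2dist \<mu> (\<nu> i) f \<le> L2dist \<mu> (\<nu> j0) f + 4 * d / 2^(j0 - 1) - 4 * d / 2^(i - 1)"
  using i
proof (induction i rule: nat_induct_at_least)
  case base then show ?case by simp
next
  case (Suc n)
  have IH: "L2dist \<mu> (\<nu> n) f \<le> L2dist \<mu> (\<nu> j0) f + 4 * d / 2^(j0 - 1) - 4 * d / 2^(n - 1)" using Suc by auto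
  have n1: "1 \<le> n" using Suc j0 by auto
  have st: "L2dist \<mu> (\<nu> n) (\<nu> (Suc n)) \<le> 2 * d / 2^(n - 1)" using step_bound[of "Suc n"] Suc n1 by auto
  have "L2dist \<mu> (\<nu> (Suc n)) f \<le> L2dist \<mu> (\<nu> (Suc n)) (\<nu> n) + L2dist \<mu> (\<nu> n) f"
    using tri nu_F fF Suc n1 by auto
  also have "\<dots> \<le> 2 * d / 2^(n - 1) + (L2dist \<mu> (\<nu> j0) f + 4 * d / 2^(j0 - 1) - 4 * d / 2^(n - 1))"
    using st IH by (simp add: L2dist_sym)
  also have "\<dots> = L2dist \<mu> (\<nu> j0) f + 4 * d / 2^(j0 - 1) - 4 * d / 2^(Suc n - 1)"
  proof -
    have "(2::real)^(Suc n - 1) = 2 * 2^(n - 1)" using n1 by (cases n) auto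
    then show ?thesis by (simp add: field_simps)
  qed
  finally show ?case .
qed

lemma good_level:
  assumes j: "2 \<le> j" "j \<le> J1" and prev: "L2dist \<mu> (\<nu> (j - 1)) f \<le> d / 2^(j - 2)" and nf: "\<not> fail j"
  shows "L2dist \<mu> (\<nu> j) f \<le> d / 2^(j - 1)"
proof -
  have jt: "j \<le> Jt" using j J1 by auto
  define q where "q = \<nu> (j - 1)"
  define \<delta> where "\<delta> = d / (2^(j - 2) * c)"
  define C where "C = c / 2 - 1"
  have q: "q \<in> Lv (j - 1)" unfolding q_def using nu_Lv[of "j - 1"] j jt by auto
  have qf: "L2dist \<mu> q f \<le> d / 2^(j - 2)" using prev unfolding q_def .
  have qb: "q \<in> Lv (j - 1) \<inter> L2ball \<mu> f (d / 2^(j - 2))" using q qf unfolding L2ball_def by (auto simp: L2dist_sym)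
  from off_good[OF j(1) jt q fF qf] have "\<exists>u. u \<in> off j q \<and> L2dist \<mu> u f \<le> \<delta>" unfolding \<delta>_def by blast
  then have us: "ustar j q \<in> off j q" "L2dist \<mu> (ustar j q) f \<le> \<delta>"
    unfolding ustarG_def \<delta>_def by (smt (verit) someI_ex)+
  have fin: "finite (off j q)" using off_card[OF j(1) jt q] Mfin j by auto
  have sel: "selected \<mu> N k G X C \<delta> (off j q) (\<nu> j)"
    using path j jt unfolding estimator_path_def q_def \<delta>_def C_def by auto
  have Cd: "C * \<delta> > 0" unfolding C_def \<delta>_def using c2 dpos by simp
  have offF: "off j q \<subseteq> F" using off_F[OF j(1) jt q] .
  have gd: "\<forall>v\<in>off j q. L2dist \<mu> (ustar j q) v \<ge> C * \<delta> \<longrightarrow> psi N k G X (ustar j q) v \<and> \<not> psi N k G X v (ustar j q)"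
  proof (intro ballI impI)
    fix v assume v: "v \<in> off j q" "L2dist \<mu> (ustar j q) v \<ge> C * \<delta>"
    then have g: "good N k G X (ustar j q) v" using nf qb unfolding fail_def C_def \<delta>_def by blast
    have pos: "\<forall>g<N div k. \<forall>i\<in>G g. ustar j q (X i) > 0 \<and> v (X i) > 0"
    proof (intro allI impI ballI)
      fix g i assume "g < N div k" "i \<in> G g"
      then have "X i \<in> B" using GN XB by auto
      moreover have "ustar j q \<in> dens_class \<mu> B \<alpha> \<beta>" "v \<in> dens_class \<mu> B \<alpha> \<beta>" using us v offF Fd by auto
      ultimately show "ustar j q (X i) > 0 \<and> v (X i) > 0" using ap unfolding dens_class_def by force
    qed
    show "psi N k G X (ustar j q) v \<and> \<not> psi N k G X v (ustar j q)" by (rule good_psi[OF k pos g])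
  qed
  have "L2dist \<mu> (\<nu> j) (ustar j q) < C * \<delta>" by (rule sel_good[OF fin us(1) Cd gd sel])
  moreover have "L2dist \<mu> (\<nu> j) f \<le> L2dist \<mu> (\<nu> j) (ustar j q) + L2dist \<mu> (ustar j q) f"
  proof -
    have "\<nu> j \<in> F" using nu_F j jt by auto
    moreover have "ustar j q \<in> F" using offF us by auto
    ultimately show ?thesis using tri fF by blast
  qed
  moreover have "C * \<delta> + \<delta> = d / 2^(j - 1)"
    unfolding C_def \<delta>_def using pow_j[of j] j c2 by (simp add: field_simps)
  ultimately show ?thesis using us(2) by linarith
qed

lemma path_bound:
  "(L2dist \<mu> (\<nu> Jt) f)^2 \<le> 25 * d^2 / 4^(J1 - 1) + (\<Sum>j\<in>{2..J1}. (if fail j then 25 * d^2 / 4^(j - 2) else 0))"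
proof -
  define P where "P = (\<lambda>j. L2dist \<mu> (\<nu> j) f \<le> d / 2^(j - 1))"
  define S where "S = {j \<in> {1..J1}. \<forall>i\<in>{1..j}. P i}"
  have P1: "P 1" unfolding P_def using F_diam nu_F fF J1 by auto
  have "1 \<in> S" unfolding S_def using P1 J1 by auto
  have finS: "finite S" unfolding S_def by auto
  define j0 where "j0 = Max S"
  have j0S: "j0 \<in> S" unfolding j0_def using finS \<open>1 \<in> S\<close> by (intro Max_in) auto
  then have j0: "1 \<le> j0" "j0 \<le> J1" "P j0" unfolding S_def by auto
  have sq: "(5 * d / 2^n)^2 = 25 * d^2 / 4^n" for n :: nat
  proof -
    have "(2::real)^n * 2^n = 4^n" by (simp flip: power_mult_distrib)
    then show ?thesis by (simp add: power2_eq_square)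
  qed
  have sum0: "(\<Sum>j\<in>{2..J1}. (if fail j then 25 * d^2 / 4^(j - 2) else 0)) \<ge> 0"
    by (rule sum_nonneg) auto
  have fin5: "L2dist \<mu> (\<nu> Jt) f \<le> 5 * d / 2^(j0 - 1)"
  proof -
    have "L2dist \<mu> (\<nu> Jt) f \<le> L2dist \<mu> (\<nu> j0) f + 4 * d / 2^(j0 - 1) - 4 * d / 2^(Jt - 1)"
      using drift[of j0 Jt] j0 J1 by auto
    moreover have "4 * d / 2^(Jt - 1) \<ge> 0" using dpos by simp
    ultimately show ?thesis using j0(3) unfolding P_def by simp
  qed
  show ?thesis
  proof (cases "j0 = J1")
    case True
    have "(L2dist \<mu> (\<nu> Jt) f)^2 \<le> (5 * d / 2^(J1 - 1))^2"
      using fin5 True L2dist_nonneg by (intro power_mono) auto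
    then show ?thesis using sq sum0 by simp
  next
    case False
    define j where "j = Suc j0"
    have jr: "2 \<le> j" "j \<le> J1" using j0 False unfolding j_def by auto
    have "j \<notin> S"
    proof
      assume "j \<in> S"
      then have "j \<le> j0" unfolding j0_def using Max_ge[OF finS] by blast
      then show False unfolding j_def by simp
    qed
    then have nP: "\<not> P j" using j0S jr unfolding S_def j_def by (auto simp: le_Suc_eq)
    have prev: "L2dist \<mu> (\<nu> (j - 1)) f \<le> d / 2^(j - 2)" using j0(3) unfolding P_def j_def by simp
    have fj: "fail j" using good_level[OF jr prev] nP unfolding P_def by blast
    have "(L2dist \<mu> (\<nu> Jt) f)^2 \<le> (5 * d / 2^(j - 2))^2"
      using fin5 L2dist_nonneg unfolding j_def by (intro power_mono) auto
    also have "\<dots> = (if fail j then 25 * d^2 / 4^(j - 2) else 0)" using fj sq by simp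
    also have "\<dots> \<le> (\<Sum>j\<in>{2..J1}. (if fail j then 25 * d^2 / 4^(j - 2) else 0))"
      by (rule member_le_sum) (use jr in auto)
    finally have "(L2dist \<mu> (\<nu> Jt) f)^2 \<le> (\<Sum>j\<in>{2..J1}. (if fail j then 25 * d^2 / 4^(j - 2) else 0))" .
    moreover have "25 * d^2 / 4^(J1 - 1) \<ge> 0" by simp
    ultimately show ?thesis by linarith
  qed
qed

lemma path_bound2:
  "(L2dist \<mu> (\<nu> Jt) f)^2 \<le> 25 * d^2 / 4^(J1 - 1) + (\<Sum>j\<in>{2..J1}. (if (\<exists>q \<in> Lv (j - 1) \<inter> L2ball \<mu> f (d / 2^(j - 2)). \<exists>v\<in>off j q.
      L2dist \<mu> (ustarG \<mu> off f d c j q) v \<ge> (c / 2 - 1) * (d / (2^(j - 2) * c)) \<and> \<not> good N k G X (ustarG \<mu> off f d c j q) v) then 25 * d^2 / 4^(j - 2) else 0))"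
  using path_bound unfolding fail_def .

end

lemma pw_ineq:
  fixes a b e \<alpha> \<beta> C :: real
  assumes a: "\<alpha> \<le> a" "a \<le> \<beta>" and b: "\<alpha> \<le> b" "b \<le> \<beta>" and ap: "0 < \<alpha>" and Cp: "C > 0"
  shows "(a + e) * sqrt (b / a) \<le> (a + b) / 2 - (b - a)^2 / (8 * \<beta>) + e + (C * e^2 + (b - a)^2 / (4 * \<alpha>^2 * C)) / 2"
proof -
  define x where "x = sqrt a"
  define y where "y = sqrt b"
  have ax: "a = x^2" "b = y^2" unfolding x_def y_def using a b ap by auto
  have xp: "x > 0" "y > 0" unfolding x_def y_def using a b ap by auto
  have x2: "x^2 \<ge> \<alpha>" "y^2 \<ge> \<alpha>" "x^2 \<le> \<beta>" "y^2 \<le> \<beta>" using a b ax by auto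
  have bp: "\<beta> > 0" using a ap by linarith
  have sq: "sqrt (b / a) = y / x" unfolding x_def y_def by (simp add: real_sqrt_divide)
  have t1: "a * sqrt (b / a) = x * y" using sq ax xp by (simp add: power2_eq_square)
  have xy2: "(x + y)^2 \<le> 4 * \<beta>"
  proof -
    have "(x + y)^2 \<le> 2 * (x^2 + y^2)"
    proof -
      have "2 * (x^2 + y^2) - (x + y)^2 = (x - y)^2" by (simp add: power2_eq_square algebra_simps)
      then show ?thesis by (metis diff_ge_0_iff_ge zero_le_power2)
    qed
    also have "\<dots> \<le> 4 * \<beta>" using x2 by simp
    finally show ?thesis .
  qed
  have xy3: "(x + y)^2 \<ge> 4 * \<alpha>"
  proof -
    have "(x + y)^2 = x^2 + y^2 + 2 * x * y" by (simp add: power2_sum)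
    moreover have "x * y \<ge> \<alpha>"
    proof -
      have "\<alpha> * \<alpha> \<le> x^2 * y^2" using x2 ap by (intro mult_mono) auto
      then have "(x * y)^2 \<ge> \<alpha>^2" by (simp add: power_mult_distrib power2_eq_square mult_ac)
      moreover have "0 \<le> x * y" using xp by simp
      ultimately show ?thesis by (rule power2_le_imp_le)
    qed
    ultimately show ?thesis using x2 by linarith
  qed
  have D: "(b - a)^2 = (y - x)^2 * (x + y)^2"
  proof -
    have "b - a = (y - x) * (x + y)" unfolding ax by (simp add: power2_eq_square algebra_simps)
    then show ?thesis by (simp add: power_mult_distrib)
  qed
  have p1: "x * y \<le> (a + b) / 2 - (b - a)^2 / (8 * \<beta>)"
  proof -
    have "(b - a)^2 \<le> (y - x)^2 * (4 * \<beta>)" unfolding D by (rule mult_left_mono[OF xy2]) simp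
    then have "(b - a)^2 / (8 * \<beta>) \<le> (y - x)^2 * (4 * \<beta>) / (8 * \<beta>)" using bp by (intro divide_right_mono) auto
    also have "\<dots> = (y - x)^2 / 2" using bp by simp
    finally have "(b - a)^2 / (8 * \<beta>) \<le> (y - x)^2 / 2" .
    moreover have "(a + b) / 2 - x * y = (y - x)^2 / 2" using ax by (simp add: power2_eq_square algebra_simps)
    ultimately show ?thesis by linarith
  qed
  define w where "w = y / x - 1"
  have w2: "w^2 \<le> (b - a)^2 / (4 * \<alpha>^2)"
  proof -
    have "w = (y - x) / x" unfolding w_def using xp by (simp add: field_simps)
    then have "w^2 = (y - x)^2 / x^2" by (simp add: power_divide)
    also have "\<dots> \<le> (y - x)^2 / \<alpha>" using x2 ap xp by (intro divide_left_mono) auto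
    also have "(y - x)^2 \<le> (b - a)^2 / (4 * \<alpha>)"
    proof -
      have "(y - x)^2 * (4 * \<alpha>) \<le> (y - x)^2 * (x + y)^2" by (rule mult_left_mono[OF xy3]) simp
      then show ?thesis unfolding D using ap by (simp add: pos_le_divide_eq mult.commute)
    qed
    then have "(y - x)^2 / \<alpha> \<le> (b - a)^2 / (4 * \<alpha>) / \<alpha>" using ap by (intro divide_right_mono) auto
    also have "\<dots> = (b - a)^2 / (4 * \<alpha>^2)" by (simp add: power2_eq_square)
    finally show ?thesis .
  qed
  have p2: "e * w \<le> (C * e^2 + w^2 / C) / 2"
  proof -
    have "0 \<le> (C * e - w)^2 / C" using Cp by simp
    also have "\<dots> = C * e^2 - 2 * (e * w) + w^2 / C" using Cp by (simp add: power2_eq_square field_simps)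
    finally show ?thesis by simp
  qed
  have p3: "w^2 / C \<le> (b - a)^2 / (4 * \<alpha>^2 * C)"
  proof -
    have "w^2 / C \<le> (b - a)^2 / (4 * \<alpha>^2) / C" by (rule divide_right_mono[OF w2]) (use Cp in simp)
    then show ?thesis by simp
  qed
  have ew: "e * sqrt (b / a) = e + e * w" unfolding w_def sq by (simp add: algebra_simps)
  have "(a + e) * sqrt (b / a) = x * y + e + e * w" using t1 ew by (simp add: distrib_right)
  
  also have "\<dots> \<le> ((a + b) / 2 - (b - a)^2 / (8 * \<beta>)) + e + (C * e^2 + w^2 / C) / 2" using p1 p2 by linarith
  also have "\<dots> \<le> ((a + b) / 2 - (b - a)^2 / (8 * \<beta>)) + e + (C * e^2 + (b - a)^2 / (4 * \<alpha>^2 * C)) / 2"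
    by (intro add_left_mono divide_right_mono p3) simp
  finally show ?thesis by simp
qed

lemma sqrt_ratio_bm:
  assumes sp: "space \<mu> = B" and ap: "0 < \<alpha>" and u: "u \<in> dens_class \<mu> B \<alpha> \<beta>" and v: "v \<in> dens_class \<mu> B \<alpha> \<beta>"
  shows "bm \<mu> (\<lambda>z. sqrt (v z / u z))"
  unfolding bm_def
proof (intro conjI exI[of _ "sqrt (\<beta> / \<alpha>)"] ballI)
  have "u \<in> borel_measurable \<mu>" "v \<in> borel_measurable \<mu>" using u v unfolding dens_class_def by auto
  then show "(\<lambda>z. sqrt (v z / u z)) \<in> borel_measurable \<mu>" by measurable
  fix z assume "z \<in> space \<mu>"
  then have "\<alpha> \<le> u z" "v z \<le> \<beta>" "\<alpha> \<le> v z" using u v sp unfolding dens_class_def by auto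
  then have "v z / u z \<le> \<beta> / \<alpha>" using ap by (intro frac_le) auto
  moreover have "0 \<le> v z / u z" using \<open>\<alpha> \<le> u z\<close> \<open>\<alpha> \<le> v z\<close> ap by simp
  ultimately show "\<bar>sqrt (v z / u z)\<bar> \<le> sqrt (\<beta> / \<alpha>)" by (simp add: real_sqrt_le_mono)
qed

lemma rho_bound:
  assumes ps: "prob_space \<mu>" and sp: "space \<mu> = B" and ap: "0 < \<alpha>"
    and f: "f \<in> dens_class \<mu> B \<alpha> \<beta>" and u: "u \<in> dens_class \<mu> B \<alpha> \<beta>" and v: "v \<in> dens_class \<mu> B \<alpha> \<beta>"
    and Cp: "C > 0"
  shows "integral\<^sup>L \<mu> (\<lambda>z. f z * sqrt (v z / u z)) \<le>
     1 - (L2dist \<mu> u v)^2 / (8 * \<beta>) + (C * (L2dist \<mu> f u)^2 + (L2dist \<mu> u v)^2 / (4 * \<alpha>^2 * C)) / 2"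
proof -
  have fb: "bm \<mu> f" and ub: "bm \<mu> u" and vb: "bm \<mu> v" using dc_bm[OF _ sp ap] f u v by auto
  have iu: "integrable \<mu> u" and iv: "integrable \<mu> v" and iff: "integrable \<mu> f" using bm_integrable[OF ps] fb ub vb by auto
  have ifu: "integrable \<mu> (\<lambda>z. (f z - u z)^2)" using bm_integrable[OF ps bm_sq[OF bm_diff[OF fb ub]]] .
  have iuv: "integrable \<mu> (\<lambda>z. (u z - v z)^2)" using bm_integrable[OF ps bm_sq[OF bm_diff[OF ub vb]]] .
  have il: "integrable \<mu> (\<lambda>z. f z * sqrt (v z / u z))"
    using bm_integrable[OF ps bm_mult[OF fb sqrt_ratio_bm[OF sp ap u v]]] .
  define \<kappa> where "\<kappa> = 1 / (8 * \<alpha>^2 * C) - 1 / (8 * \<beta>)"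
  define R where "R = (\<lambda>z. (1/2) * u z + (1/2) * v z + f z - u z + (C / 2) * (f z - u z)^2 + \<kappa> * (u z - v z)^2)"
  have pw: "f z * sqrt (v z / u z) \<le> R z" if z: "z \<in> space \<mu>" for z
  proof -
    have "\<alpha> \<le> u z" "u z \<le> \<beta>" "\<alpha> \<le> v z" "v z \<le> \<beta>" using u v z sp unfolding dens_class_def by auto
    from pw_ineq[OF this ap Cp, of "f z - u z"]
    have "f z * sqrt (v z / u z) \<le> (u z + v z) / 2 - (v z - u z)^2 / (8 * \<beta>) + (f z - u z) + (C * (f z - u z)^2 + (v z - u z)^2 / (4 * \<alpha>^2 * C)) / 2"
      by simp
    also have "\<dots> = R z" unfolding R_def \<kappa>_def by (simp add: power2_commute[of "v z"] field_simps)
    finally show ?thesis .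
  qed
  have iR: "integrable \<mu> R" unfolding R_def using iu iv iff ifu iuv by simp
  have "integral\<^sup>L \<mu> (\<lambda>z. f z * sqrt (v z / u z)) \<le> integral\<^sup>L \<mu> R"
    by (rule integral_mono[OF il iR]) (use pw in auto)
  also have "integral\<^sup>L \<mu> R = (1/2) * integral\<^sup>L \<mu> u + (1/2) * integral\<^sup>L \<mu> v + integral\<^sup>L \<mu> f - integral\<^sup>L \<mu> u
        + (C / 2) * integral\<^sup>L \<mu> (\<lambda>z. (f z - u z)^2) + \<kappa> * integral\<^sup>L \<mu> (\<lambda>z. (u z - v z)^2)"
    unfolding R_def using iu iv iff ifu iuv by simp
  also have "\<dots> = 1 + (C / 2) * (L2dist \<mu> f u)^2 + \<kappa> * (L2dist \<mu> u v)^2"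
    using f u v unfolding dens_class_def L2dist_sq by simp
  also have "\<dots> = 1 - (L2dist \<mu> u v)^2 / (8 * \<beta>) + (C * (L2dist \<mu> f u)^2 + (L2dist \<mu> u v)^2 / (4 * \<alpha>^2 * C)) / 2"
    unfolding \<kappa>_def by (simp add: field_simps)
  finally show ?thesis .
qed

lemma dens_prob:
  assumes ps: "prob_space \<mu>" and sp: "space \<mu> = B" and ap: "0 < \<alpha>" and f: "f \<in> dens_class \<mu> B \<alpha> \<beta>"
  shows "prob_space (density \<mu> (\<lambda>x. ennreal (f x)))"
proof
  have fb: "bm \<mu> f" using dc_bm[OF f sp ap] .
  have fm: "f \<in> borel_measurable \<mu>" using f unfolding dens_class_def by auto
  have "emeasure (density \<mu> (\<lambda>x. ennreal (f x))) (space (density \<mu> (\<lambda>x. ennreal (f x))))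
      = (\<integral>\<^sup>+ x. ennreal (f x) * indicator (space \<mu>) x \<partial>\<mu>)"
  proof -
    have "space (density \<mu> (\<lambda>x. ennreal (f x))) = space \<mu>" by simp
    moreover have "(\<lambda>x. ennreal (f x)) \<in> borel_measurable \<mu>" using fm by measurable
    ultimately show ?thesis using emeasure_density[of "\<lambda>x. ennreal (f x)" \<mu> "space \<mu>"] by simp
  qed
  also have "\<dots> = (\<integral>\<^sup>+ x. ennreal (f x) \<partial>\<mu>)" by (rule nn_integral_cong) auto
  also have "\<dots> = ennreal (integral\<^sup>L \<mu> f)"
    by (rule nn_integral_eq_integral[OF bm_integrable[OF ps fb]]) (use f sp ap in \<open>auto simp: dens_class_def intro!: AE_I2\<close>)
  also have "\<dots> = 1" using f unfolding dens_class_def by simp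
  finally show "emeasure (density \<mu> (\<lambda>x. ennreal (f x))) (space (density \<mu> (\<lambda>x. ennreal (f x)))) = 1" .
qed

lemma dens_integral:
  assumes ps: "prob_space \<mu>" and sp: "space \<mu> = B" and ap: "0 < \<alpha>" and f: "f \<in> dens_class \<mu> B \<alpha> \<beta>"
    and h: "bm \<mu> h" and hn: "\<forall>z\<in>space \<mu>. h z \<ge> 0"
  shows "(\<integral>\<^sup>+ z. ennreal (h z) \<partial>density \<mu> (\<lambda>x. ennreal (f x))) = ennreal (integral\<^sup>L \<mu> (\<lambda>z. f z * h z))"
proof -
  have fb: "bm \<mu> f" using dc_bm[OF f sp ap] .
  have fm: "f \<in> borel_measurable \<mu>" and hm: "h \<in> borel_measurable \<mu>" using fb h unfolding bm_def by auto
  have "(\<integral>\<^sup>+ z. ennreal (h z) \<partial>density \<mu> (\<lambda>x. ennreal (f x))) = (\<integral>\<^sup>+ z. ennreal (f z) * ennreal (h z) \<partial>\<mu>)"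
    by (rule nn_integral_density) (use fm hm in auto)
  also have "\<dots> = (\<integral>\<^sup>+ z. ennreal (f z * h z) \<partial>\<mu>)"
  proof (rule nn_integral_cong)
    fix z assume "z \<in> space \<mu>"
    then have "f z \<ge> 0" using f sp ap unfolding dens_class_def by force
    then show "ennreal (f z) * ennreal (h z) = ennreal (f z * h z)"
      by (rule ennreal_mult[symmetric]) (use hn \<open>z \<in> space \<mu>\<close> in auto)
  qed
  also have "\<dots> = ennreal (integral\<^sup>L \<mu> (\<lambda>z. f z * h z))"
  proof (rule nn_integral_eq_integral[OF bm_integrable[OF ps bm_mult[OF fb h]]])
    show "AE x in \<mu>. 0 \<le> f x * h x"
    proof (rule AE_I2)
      fix z assume z: "z \<in> space \<mu>"
      then have "f z \<ge> 0" using f sp ap unfolding dens_class_def by force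
      then show "0 \<le> f z * h z" using hn z by simp
    qed
  qed
  finally show ?thesis .
qed

lemma prod_nn:
  fixes N :: nat
  assumes pD: "prob_space D" and h: "h \<in> borel_measurable D" and I: "I \<subseteq> {..<N}"
  shows "(\<integral>\<^sup>+ x. (\<Prod>i\<in>I. ennreal (h (x i))) \<partial>PiM {..<N} (\<lambda>_. D)) = (\<integral>\<^sup>+ z. ennreal (h z) \<partial>D)^card I"
proof -
  interpret P: product_prob_space "\<lambda>_::nat. D" "{..<N}" by (rule product_prob_spaceI) (rule pD)
  define g where "g = (\<lambda>i::nat. if i \<in> I then (\<lambda>z. ennreal (h z)) else (\<lambda>_. 1))"
  have fI: "finite I" using I finite_subset by blast
  have eq: "(\<Prod>i\<in>I. ennreal (h (x i))) = (\<Prod>i\<in>{..<N}. g i (x i))" for x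
  proof -
    have "(\<Prod>i\<in>{..<N}. g i (x i)) = (\<Prod>i\<in>{..<N}. if i \<in> I then ennreal (h (x i)) else 1)"
      unfolding g_def by (intro prod.cong) auto
    also have "\<dots> = (\<Prod>i\<in>{..<N} \<inter> I. ennreal (h (x i)))" by (rule prod.inter_restrict[symmetric]) simp
    also have "{..<N} \<inter> I = I" using I by auto
    finally show ?thesis by simp
  qed
  have "(\<integral>\<^sup>+ x. (\<Prod>i\<in>I. ennreal (h (x i))) \<partial>PiM {..<N} (\<lambda>_. D)) = (\<integral>\<^sup>+ x. (\<Prod>i\<in>{..<N}. g i (x i)) \<partial>PiM {..<N} (\<lambda>_. D))"
    unfolding eq ..
  also have "\<dots> = (\<Prod>i\<in>{..<N}. integral\<^sup>N D (g i))"
    by (rule P.product_nn_integral_prod) (use h in \<open>auto simp: g_def\<close>)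
  also have "\<dots> = (\<Prod>i\<in>{..<N}. if i \<in> I then (\<integral>\<^sup>+ z. ennreal (h z) \<partial>D) else 1)"
    unfolding g_def by (intro prod.cong) (auto simp: prob_space.emeasure_space_1[OF pD])
  also have "\<dots> = (\<Prod>i\<in>{..<N} \<inter> I. (\<integral>\<^sup>+ z. ennreal (h z) \<partial>D))" by (rule prod.inter_restrict[symmetric]) simp
  also have "{..<N} \<inter> I = I" using I by auto
  finally show ?thesis by simp
qed

definition Pz :: "(nat \<Rightarrow> nat set) \<Rightarrow> ('a \<Rightarrow> real) \<Rightarrow> ('a \<Rightarrow> real) \<Rightarrow> (nat \<Rightarrow> 'a) \<Rightarrow> nat \<Rightarrow> bool" where
  "Pz G u v Z g \<longleftrightarrow> (\<Sum>i\<in>G g. ln (u (Z i) / v (Z i))) > 0"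

lemma corrupt:
  fixes N k :: nat and \<epsilon> :: real
  assumes k: "0 < k" "k dvd N" and eps: "0 < \<epsilon>" "real k = 1 / (3 * \<epsilon>)"
    and disj: "\<forall>i<N div k. \<forall>j<N div k. i \<noteq> j \<longrightarrow> G i \<inter> G j = {}"
    and cor: "real (card {i\<in>{..<N}. Y i \<noteq> x i}) \<le> \<epsilon> * real N"
    and GN: "\<forall>g<N div k. G g \<subseteq> {..<N}"
    and ng: "\<not> good N k G Y u v"
  shows "real (card {g\<in>{..<N div k}. \<not> Pz G u v x g}) \<ge> real (N div k) / 6"
proof -
  define m where "m = N div k"
  have mr: "real m = real N / real k" unfolding m_def using k by (simp add: real_of_nat_div)
  have em: "\<epsilon> * real N = real m / 3" using mr eps by (simp add: field_simps)
  define Cor where "Cor = {g\<in>{..<m}. \<exists>i\<in>G g. Y i \<noteq> x i}"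
  define Ds where "Ds = {i\<in>{..<N}. Y i \<noteq> x i}"
  define pick where "pick = (\<lambda>g. SOME i. i \<in> G g \<and> Y i \<noteq> x i)"
  have pk: "pick g \<in> G g \<and> Y (pick g) \<noteq> x (pick g)" if "g \<in> Cor" for g
    using that unfolding Cor_def pick_def by (metis (mono_tags, lifting) mem_Collect_eq someI)
  have inj: "inj_on pick Cor"
  proof
    fix g1 g2 assume g: "g1 \<in> Cor" "g2 \<in> Cor" "pick g1 = pick g2"
    have "pick g1 \<in> G g1" using pk[OF g(1)] by blast
    moreover have "pick g2 \<in> G g2" using pk[OF g(2)] by blast
    ultimately have "pick g1 \<in> G g1 \<inter> G g2" using g(3) by auto
    then show "g1 = g2" using disj g unfolding Cor_def m_def by blast
  qed
  have "pick ` Cor \<subseteq> Ds" using pk GN unfolding Ds_def Cor_def m_def by auto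
  then have cC: "card Cor \<le> card Ds" using card_inj_on_le[OF inj] unfolding Ds_def by auto
  define A where "A = {g\<in>{..<m}. Pz G u v Y g}"
  define A' where "A' = {g\<in>{..<m}. \<not> Pz G u v x g}"
  have "{..<m} \<subseteq> Cor \<union> A \<union> A'"
  proof
    fix g assume g: "g \<in> {..<m}"
    show "g \<in> Cor \<union> A \<union> A'"
    proof (cases "g \<in> Cor \<or> \<not> Pz G u v x g")
      case True then show ?thesis using g unfolding A'_def by auto
    next
      case False
      then have "\<forall>i\<in>G g. Y i = x i" "Pz G u v x g" using g unfolding Cor_def by auto
      then have "Pz G u v Y g" unfolding Pz_def by (metis (no_types, lifting) sum.cong)
      then show ?thesis using g unfolding A_def by auto
    qed
  qed
  then have "m \<le> card (Cor \<union> A \<union> A')" using card_mono[of "Cor \<union> A \<union> A'" "{..<m}"]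
    unfolding Cor_def A_def A'_def by auto
  also have "\<dots> \<le> card Cor + card A + card A'" by (meson add_le_mono card_Un_le le_refl order_trans)
  finally have "real m \<le> real (card Cor) + real (card A) + real (card A')" by linarith
  moreover have "real (card A) \<le> real N / (2 * real k)" using ng unfolding good_def A_def Pz_def m_def by simp
  moreover have "real N / (2 * real k) = real m / 2" using mr by simp
  moreover have "real (card Cor) \<le> real m / 3" using cC cor em unfolding Ds_def by linarith
  ultimately show ?thesis unfolding A'_def m_def by linarith
qed

lemma group_ge1:
  assumes pos: "\<forall>i\<in>Gg. u (x i) > 0 \<and> v (x i) > 0" and np: "\<not> (\<Sum>i\<in>Gg. ln (u (x i) / v (x i))) > 0"
  shows "(\<Prod>i\<in>Gg. sqrt (v (x i) / u (x i))) \<ge> 1"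
proof -
  have "(\<Prod>i\<in>Gg. sqrt (v (x i) / u (x i))) = (\<Prod>i\<in>Gg. exp (ln (v (x i) / u (x i)) / 2))"
  proof (rule prod.cong)
    fix i assume "i \<in> Gg"
    then have p: "v (x i) / u (x i) > 0" and p2: "v (x i) > 0" "u (x i) > 0" using pos by auto
    then have "sqrt (v (x i) / u (x i)) = (v (x i) / u (x i)) powr (1/2)" by (simp add: powr_half_sqrt)
    also have "\<dots> = exp (ln (v (x i) / u (x i)) / 2)" using p p2 by (simp add: powr_def)
    finally show "sqrt (v (x i) / u (x i)) = exp (ln (v (x i) / u (x i)) / 2)" .
  qed simp
  also have "\<dots> = exp (\<Sum>i\<in>Gg. ln (v (x i) / u (x i)) / 2)"
    by (cases "finite Gg") (simp_all add: exp_sum)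
  also have "(\<Sum>i\<in>Gg. ln (v (x i) / u (x i)) / 2) = - (\<Sum>i\<in>Gg. ln (u (x i) / v (x i))) / 2"
  proof -
    have "(\<Sum>i\<in>Gg. ln (v (x i) / u (x i)) / 2) = (\<Sum>i\<in>Gg. - ln (u (x i) / v (x i)) / 2)"
      using pos by (intro sum.cong) (auto simp: ln_div)
    then show ?thesis by (simp add: sum_negf sum_divide_distrib)
  qed
  finally show ?thesis using np by simp
qed

lemma zmaj:
  fixes m t :: nat
  assumes disj: "\<forall>i<m. \<forall>j<m. i \<noteq> j \<longrightarrow> G i \<inter> G j = {}" and fin: "\<forall>g<m. finite (G g)"
    and pos: "\<forall>g<m. \<forall>i\<in>G g. u (x i) > 0 \<and> v (x i) > 0"
    and bad: "t \<le> card {g\<in>{..<m}. \<not> Pz G u v x g}"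
  shows "1 \<le> (\<Sum>S\<in>{S. S \<subseteq> {..<m} \<and> card S = t}. \<Prod>i\<in>\<Union>(G ` S). ennreal (sqrt (v (x i) / u (x i))))"
proof -
  obtain S where S: "S \<subseteq> {g\<in>{..<m}. \<not> Pz G u v x g}" "card S = t" "finite S"
    using obtain_subset_with_card_n[OF bad] by blast
  have Sm: "S \<subseteq> {..<m}" using S by auto
  have "(\<Prod>i\<in>\<Union>(G ` S). ennreal (sqrt (v (x i) / u (x i)))) = (\<Prod>g\<in>S. \<Prod>i\<in>G g. ennreal (sqrt (v (x i) / u (x i))))"
  proof (rule prod.UNION_disjoint[OF S(3)])
    show "\<forall>g\<in>S. finite (G g)" using Sm fin by auto
    show "\<forall>i\<in>S. \<forall>j\<in>S. i \<noteq> j \<longrightarrow> G i \<inter> G j = {}" using Sm disj by blast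
  qed
  also have "\<dots> = (\<Prod>g\<in>S. ennreal (\<Prod>i\<in>G g. sqrt (v (x i) / u (x i))))"
  proof (intro prod.cong refl prod_ennreal)
    fix g i assume "g \<in> S" "i \<in> G g"
    then have "v (x i) > 0" "u (x i) > 0" using pos Sm by auto
    then show "0 \<le> sqrt (v (x i) / u (x i))" by simp
  qed
  also have "\<dots> = ennreal (\<Prod>g\<in>S. \<Prod>i\<in>G g. sqrt (v (x i) / u (x i)))"
  proof (intro prod_ennreal prod_nonneg)
    fix g i assume "g \<in> S" "i \<in> G g"
    then have "v (x i) > 0" "u (x i) > 0" using pos Sm by auto
    then show "0 \<le> sqrt (v (x i) / u (x i))" by simp
  qed
  also have "\<dots> \<ge> 1"
  proof -
    have "(\<Prod>g\<in>S. \<Prod>i\<in>G g. sqrt (v (x i) / u (x i))) \<ge> 1"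
    proof (rule prod_ge_1)
      fix g assume g: "g \<in> S"
      then have "\<not> Pz G u v x g" "g < m" using S by auto
      then show "1 \<le> (\<Prod>i\<in>G g. sqrt (v (x i) / u (x i)))"
        using group_ge1[of "G g" u x v] pos unfolding Pz_def by auto
    qed
    then show ?thesis by simp
  qed
  finally have one: "1 \<le> (\<Prod>i\<in>\<Union>(G ` S). ennreal (sqrt (v (x i) / u (x i))))" .
  have "S \<in> {S. S \<subseteq> {..<m} \<and> card S = t}" using Sm S by auto
  then have "(\<Prod>i\<in>\<Union>(G ` S). ennreal (sqrt (v (x i) / u (x i)))) \<le>
      (\<Sum>S\<in>{S. S \<subseteq> {..<m} \<and> card S = t}. \<Prod>i\<in>\<Union>(G ` S). ennreal (sqrt (v (x i) / u (x i))))"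
    by (intro member_le_sum) (auto intro: finite_subset[of _ "Pow {..<m}"])
  then show ?thesis using one by order
qed

lemma prod_meas:
  fixes N :: nat
  assumes h: "h \<in> borel_measurable D" and I: "I \<subseteq> {..<N}"
  shows "(\<lambda>x. \<Prod>i\<in>I. ennreal (h (x i))) \<in> borel_measurable (PiM {..<N} (\<lambda>_. D))"
proof (rule borel_measurable_prod_ennreal)
  fix i assume "i \<in> I"
  then have "i \<in> {..<N}" using I by auto
  then show "(\<lambda>x. ennreal (h (x i))) \<in> borel_measurable (PiM {..<N} (\<lambda>_. D))"
    using h by measurable
qed

lemma zint:
  fixes m t N k :: nat
  assumes pD: "prob_space D" and h: "h \<in> borel_measurable D"
    and disj: "\<forall>i<m. \<forall>j<m. i \<noteq> j \<longrightarrow> G i \<inter> G j = {}" and cG: "\<forall>g<m. card (G g) = k" "k > 0"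
    and GN: "\<forall>g<m. G g \<subseteq> {..<N}"
  shows "(\<integral>\<^sup>+ x. (\<Sum>S\<in>{S. S \<subseteq> {..<m} \<and> card S = t}. \<Prod>i\<in>\<Union>(G ` S). ennreal (h (x i))) \<partial>PiM {..<N} (\<lambda>_. D))
      = of_nat (m choose t) * (\<integral>\<^sup>+ z. ennreal (h z) \<partial>D)^(k * t)"
proof -
  have "(\<integral>\<^sup>+ x. (\<Sum>S\<in>{S. S \<subseteq> {..<m} \<and> card S = t}. \<Prod>i\<in>\<Union>(G ` S). ennreal (h (x i))) \<partial>PiM {..<N} (\<lambda>_. D))
      = (\<Sum>S\<in>{S. S \<subseteq> {..<m} \<and> card S = t}. \<integral>\<^sup>+ x. (\<Prod>i\<in>\<Union>(G ` S). ennreal (h (x i))) \<partial>PiM {..<N} (\<lambda>_. D))"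
    by (rule nn_integral_sum, rule prod_meas[OF h]) (use GN in auto)
  also have "\<dots> = (\<Sum>S\<in>{S. S \<subseteq> {..<m} \<and> card S = t}. (\<integral>\<^sup>+ z. ennreal (h z) \<partial>D)^(k * t))"
  proof (rule sum.cong[OF refl])
    fix S assume S: "S \<in> {S. S \<subseteq> {..<m} \<and> card S = t}"
    have fS: "finite S" using S finite_subset by blast
    have fG: "\<forall>g\<in>S. finite (G g)" using S cG by (metis card_ge_0_finite lessThan_iff mem_Collect_eq subsetD)
    have "card (\<Union>(G ` S)) = (\<Sum>g\<in>S. card (G g))"
      by (rule card_UN_disjoint[OF fS]) (use fG S disj in auto)
    also have "\<dots> = (\<Sum>g\<in>S. k)" using S cG by (intro sum.cong) auto
    also have "\<dots> = k * t" using S by simp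
    finally have c: "card (\<Union>(G ` S)) = k * t" .
    have "\<Union>(G ` S) \<subseteq> {..<N}" using S GN by auto
    from prod_nn[OF pD h this] show "(\<integral>\<^sup>+ x. (\<Prod>i\<in>\<Union>(G ` S). ennreal (h (x i))) \<partial>PiM {..<N} (\<lambda>_. D))
        = (\<integral>\<^sup>+ z. ennreal (h z) \<partial>D)^(k * t)" unfolding c .
  qed
  also have "\<dots> = of_nat (card {S. S \<subseteq> {..<m} \<and> card S = t}) * (\<integral>\<^sup>+ z. ennreal (h z) \<partial>D)^(k * t)"
    by simp
  also have "card {S. S \<subseteq> {..<m} \<and> card S = t} = m choose t" using n_subsets[of "{..<m}" t] by simp
  finally show ?thesis .
qed

lemma pair_int:
  fixes m t N k :: nat
  assumes ps: "prob_space \<mu>" and sp: "space \<mu> = B" and ap: "0 < \<alpha>"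
    and f: "f \<in> dens_class \<mu> B \<alpha> \<beta>" and u: "u \<in> dens_class \<mu> B \<alpha> \<beta>" and v: "v \<in> dens_class \<mu> B \<alpha> \<beta>"
    and C: "C \<ge> 8 * \<beta> + 2 * \<beta> / \<alpha>^2" and \<delta>: "\<delta> \<ge> 0"
    and d1: "L2dist \<mu> u f \<le> \<delta>" and d2: "L2dist \<mu> u v \<ge> C * \<delta>"
    and disj: "\<forall>i<m. \<forall>j<m. i \<noteq> j \<longrightarrow> G i \<inter> G j = {}" and cG: "\<forall>g<m. card (G g) = k" "k > 0"
    and GN: "\<forall>g<m. G g \<subseteq> {..<N}" and mk: "m * k = N"
    and cond: "real m * ln 2 \<le> real N * C^2 * \<delta>^2 / (192 * \<beta>)"
    and t: "real t \<ge> real m / 6"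
  shows "(\<integral>\<^sup>+ x. (\<Sum>S\<in>{S. S \<subseteq> {..<m} \<and> card S = t}. \<Prod>i\<in>\<Union>(G ` S). ennreal (sqrt (v (x i) / u (x i))))
            \<partial>PiM {..<N} (\<lambda>_. density \<mu> (\<lambda>x. ennreal (f x)))) \<le> ennreal (exp (- (real N * C^2 * \<delta>^2 / (192 * \<beta>))))"
proof -
  define D where "D = density \<mu> (\<lambda>x. ennreal (f x))"
  have pD: "prob_space D" unfolding D_def by (rule dens_prob[OF ps sp ap f])
  have bp: "\<beta> > 0"
  proof -
    interpret prob_space \<mu> by fact
    obtain z where "z \<in> space \<mu>" using not_empty by blast
    then have "\<alpha> \<le> f z" "f z \<le> \<beta>" using f sp unfolding dens_class_def by auto
    then show ?thesis using ap by linarith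
  qed
  have "2 * \<beta> / \<alpha>^2 \<ge> 0" using bp by simp
  then have Cp: "C > 0" using C bp by linarith
  have hb: "bm \<mu> (\<lambda>z. sqrt (v z / u z))" by (rule sqrt_ratio_bm[OF sp ap u v])
  have hm: "(\<lambda>z. sqrt (v z / u z)) \<in> borel_measurable D"
  proof -
    have e: "borel_measurable D = borel_measurable \<mu>" unfolding D_def by (rule measurable_cong_sets) auto
    have "(\<lambda>z. sqrt (v z / u z)) \<in> borel_measurable \<mu>" using hb unfolding bm_def by blast
    then show ?thesis by (simp only: e)
  qed
  have hn: "\<forall>z\<in>space \<mu>. sqrt (v z / u z) \<ge> 0"
  proof
    fix z assume "z \<in> space \<mu>"
    then have "u z > 0" "v z > 0" using u v sp ap unfolding dens_class_def by force+
    then show "sqrt (v z / u z) \<ge> 0" by simp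
  qed
  define \<rho> where "\<rho> = integral\<^sup>L \<mu> (\<lambda>z. f z * sqrt (v z / u z))"
  have hint: "(\<integral>\<^sup>+ z. ennreal (sqrt (v z / u z)) \<partial>D) = ennreal \<rho>"
    unfolding D_def \<rho>_def by (rule dens_integral[OF ps sp ap f hb hn])
  have \<rho>0: "\<rho> \<ge> 0" unfolding \<rho>_def
  proof (rule integral_nonneg_AE, rule AE_I2)
    fix z assume z: "z \<in> space \<mu>"
    then have "f z \<ge> 0" using f sp ap unfolding dens_class_def by force
    then show "0 \<le> f z * sqrt (v z / u z)" using hn z by simp
  qed
  define s where "s = L2dist \<mu> u v"
  have s0: "s \<ge> C * \<delta>" using d2 unfolding s_def .
  have Cd0: "C * \<delta> \<ge> 0" using Cp \<delta> by simp
  have \<rho>1: "\<rho> \<le> 1 - s^2 / (16 * \<beta>)"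
  proof -
    have r: "\<rho> \<le> 1 - s^2 / (8 * \<beta>) + (C * (L2dist \<mu> f u)^2 + s^2 / (4 * \<alpha>^2 * C)) / 2"
      unfolding \<rho>_def s_def by (rule rho_bound[OF ps sp ap f u v Cp])
    have "L2dist \<mu> f u \<le> \<delta>" using d1 by (simp add: L2dist_sym)
    then have "(L2dist \<mu> f u)^2 \<le> \<delta>^2" using L2dist_nonneg by (intro power_mono) auto
    also have "\<delta>^2 \<le> s^2 / C^2"
    proof -
      have "(C * \<delta>)^2 \<le> s^2" using s0 Cd0 by (intro power_mono) auto
      then show ?thesis using Cp by (simp add: field_simps power_mult_distrib)
    qed
    finally have "C * (L2dist \<mu> f u)^2 \<le> C * (s^2 / C^2)" using Cp by (intro mult_left_mono) auto
    also have "\<dots> = s^2 / C" by (simp add: power2_eq_square)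
    finally have A: "C * (L2dist \<mu> f u)^2 \<le> s^2 / C" .
    have "(C * (L2dist \<mu> f u)^2 + s^2 / (4 * \<alpha>^2 * C)) / 2 \<le> (s^2 / C + s^2 / (4 * \<alpha>^2 * C)) / 2"
      by (rule divide_right_mono[OF add_right_mono[OF A]]) simp
    also have "\<dots> = s^2 * ((4 * \<alpha>^2 + 1) / (8 * \<alpha>^2 * C))" using ap Cp by (simp add: field_simps)
    also have "\<dots> \<le> s^2 * (1 / (16 * \<beta>))"
    proof (rule mult_left_mono)
      have "16 * \<beta> * (4 * \<alpha>^2 + 1) = 8 * \<alpha>^2 * (8 * \<beta> + 2 * \<beta> / \<alpha>^2)" using ap by (simp add: field_simps)
      also have "\<dots> \<le> 8 * \<alpha>^2 * C" using C ap by (intro mult_left_mono) auto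
      finally show "(4 * \<alpha>^2 + 1) / (8 * \<alpha>^2 * C) \<le> 1 / (16 * \<beta>)" using ap bp Cp by (simp add: field_simps)
    qed simp
    finally show ?thesis using r by (simp add: field_simps)
  qed
  have \<rho>e: "\<rho> \<le> exp (- (s^2 / (16 * \<beta>)))" using \<rho>1 exp_ge_add_one_self[of "- (s^2 / (16 * \<beta>))"] by linarith
  have kt: "real (k * t) \<ge> real N / 6"
  proof -
    have "real (k * t) = real k * real t" by simp
    also have "\<dots> \<ge> real k * (real m / 6)" using t cG(2) by (intro mult_left_mono) auto
    finally show ?thesis using mk by (simp add: field_simps flip: of_nat_mult)
  qed
  have "\<rho>^(k * t) \<le> exp (- (s^2 / (16 * \<beta>)))^(k * t)" using \<rho>0 \<rho>e by (intro power_mono) auto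
  also have "\<dots> = exp (- (real (k * t) * (s^2 / (16 * \<beta>))))" by (simp add: exp_of_nat_mult[symmetric])
  also have "\<dots> \<le> exp (- (real N / 6 * ((C * \<delta>)^2 / (16 * \<beta>))))"
  proof -
    have "(C * \<delta>)^2 \<le> s^2" using s0 Cd0 by (intro power_mono) auto
    then have "(C * \<delta>)^2 / (16 * \<beta>) \<le> s^2 / (16 * \<beta>)" using bp by (intro divide_right_mono) auto
    then have "real N / 6 * ((C * \<delta>)^2 / (16 * \<beta>)) \<le> real (k * t) * (s^2 / (16 * \<beta>))"
      using kt bp by (intro mult_mono) auto
    then show ?thesis by simp
  qed
  also have "real N / 6 * ((C * \<delta>)^2 / (16 * \<beta>)) = 2 * (real N * C^2 * \<delta>^2 / (192 * \<beta>))"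
    by (simp add: power_mult_distrib)
  finally have \<rho>p: "\<rho>^(k * t) \<le> exp (- (2 * (real N * C^2 * \<delta>^2 / (192 * \<beta>))))" .
  have ch: "real (m choose t) \<le> exp (real N * C^2 * \<delta>^2 / (192 * \<beta>))"
  proof -
    have "m choose t \<le> 2^m" by (rule binomial_le_pow2)
    then have "real (m choose t) \<le> real (2^m)" by (simp only: of_nat_le_iff)
    also have "real (2^m) = exp (ln 2) ^ m" by simp
    also have "\<dots> = exp (real m * ln 2)" by (rule exp_of_nat_mult[symmetric])
    also have "\<dots> \<le> exp (real N * C^2 * \<delta>^2 / (192 * \<beta>))" using cond by simp
    finally show ?thesis .
  qed
  have "(\<integral>\<^sup>+ x. (\<Sum>S\<in>{S. S \<subseteq> {..<m} \<and> card S = t}. \<Prod>i\<in>\<Union>(G ` S). ennreal (sqrt (v (x i) / u (x i)))) \<partial>PiM {..<N} (\<lambda>_. D))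
      = of_nat (m choose t) * (ennreal \<rho>)^(k * t)"
    using zint[OF pD hm disj cG GN] hint by simp
  also have "\<dots> = ennreal (real (m choose t) * \<rho>^(k * t))"
    using \<rho>0 by (simp add: ennreal_power ennreal_mult' ennreal_of_nat_eq_real_of_nat)
  also have "\<dots> \<le> ennreal (exp (real N * C^2 * \<delta>^2 / (192 * \<beta>)) * exp (- (2 * (real N * C^2 * \<delta>^2 / (192 * \<beta>)))))"
    using ch \<rho>p \<rho>0 by (intro ennreal_leI mult_mono) auto
  also have "exp (real N * C^2 * \<delta>^2 / (192 * \<beta>)) * exp (- (2 * (real N * C^2 * \<delta>^2 / (192 * \<beta>))))
      = exp (- (real N * C^2 * \<delta>^2 / (192 * \<beta>)))" by (simp only: exp_add[symmetric]) simp
  finally show ?thesis unfolding D_def .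
qed

lemma ln_strict: assumes "\<gamma> > (1::real)" shows "ln \<gamma> < \<gamma> - 1"
proof -
  define r where "r = sqrt \<gamma>"
  have r: "r > 1" "r^2 = \<gamma>" unfolding r_def using assms by auto
  have "ln (r^2) = 2 * ln r" using r(1) by (simp add: ln_realpow)
  then have "ln \<gamma> = 2 * ln r" using r(2) by (simp only:)
  also have "\<dots> \<le> 2 * (r - 1)" using ln_le_minus_one[of r] r by simp
  also have "\<dots> < r^2 - 1"
  proof -
    have "(r - 1)^2 > 0" using r by simp
    then show ?thesis by (simp add: power2_eq_square algebra_simps)
  qed
  finally show ?thesis using r by simp
qed

lemma cab_pos: assumes "0 < \<alpha>" "\<alpha> < \<beta>" shows "cab \<alpha> \<beta> > 0"
proof -
  have g: "\<beta> / \<alpha> > 1" using assms by simp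
  then have "hfun (\<beta> / \<alpha>) > 0" unfolding hfun_def using ln_strict[OF g] by simp
  then show ?thesis unfolding cab_def using assms by simp
qed

lemma C10_pos:
  assumes a: "0 < \<alpha>" "\<alpha> < \<beta>" and p: "\<phi> < 3/2" and C: "C > 1 + sqrt (1/\<alpha>) / sqrt (cab \<alpha> \<beta>)"
  shows "C10 \<alpha> \<beta> C \<phi> > 0"
proof -
  have c: "cab \<alpha> \<beta> > 0" using cab_pos[OF a] .
  have K: "Kab \<alpha> \<beta> > 0" unfolding Kab_def using a c by simp
  have l: "ln (\<beta> / \<alpha>) > 0" using a by (simp add: ln_gt_zero)
  have "sqrt (1/\<alpha>) = sqrt (cab \<alpha> \<beta>) * (sqrt (1/\<alpha>) / sqrt (cab \<alpha> \<beta>))" using c by simp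
  also have "\<dots> < sqrt (cab \<alpha> \<beta>) * (C - 1)"
    using C c by (intro mult_strict_left_mono) auto
  finally have "sqrt (cab \<alpha> \<beta>) * (C - 1) - sqrt (1/\<alpha>) \<noteq> 0" by simp
  then have "Lfun \<alpha> \<beta> C > 0" unfolding Lfun_def using K l by (intro divide_pos_pos) auto
  then show ?thesis unfolding C10_def using p by simp
qed

lemma geo4: "(\<Sum>j\<in>{2..n}. (1/4::real)^(n - j)) \<le> 4/3"
proof (induction n)
  case 0 then show ?case by simp
next
  case (Suc n)
  show ?case
  proof (cases "n \<ge> 1")
    case True
    have "{2..Suc n} = insert (Suc n) {2..n}" using True by auto
    then have "(\<Sum>j\<in>{2..Suc n}. (1/4::real)^(Suc n - j)) = 1 + (\<Sum>j\<in>{2..n}. (1/4::real)^(Suc n - j))"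
      by simp
    also have "(\<Sum>j\<in>{2..n}. (1/4::real)^(Suc n - j)) = (1/4) * (\<Sum>j\<in>{2..n}. (1/4::real)^(n - j))"
      by (simp add: sum_distrib_left Suc_diff_le flip: power_Suc)
    finally show ?thesis using Suc.IH by simp
  next
    case False then have "n = 0" by simp
    then show ?thesis by simp
  qed
qed

lemma exp_neg_le: fixes y :: real assumes "y > 0" shows "exp (- y) \<le> 4 / y^2"
proof -
  have A: "y / 2 \<le> exp (y / 2)" using exp_ge_add_one_self[of "y / 2"] by linarith
  have "(y / 2)^2 \<le> exp (y / 2)^2" by (rule power_mono[OF A]) (use assms in simp)
  also have "exp (y / 2)^2 = exp y" by (simp flip: exp_of_nat_mult)
  finally have "y^2 / 4 \<le> exp y" by (simp add: power_divide)
  then have "exp (- y) * (y^2 / 4) \<le> exp (- y) * exp y" by (intro mult_left_mono) auto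
  then have "exp (- y) * y^2 \<le> 4" by (simp add: exp_minus field_simps)
  then show ?thesis using assms by (simp add: field_simps)
qed

lemma sum_bound:
  fixes Jbar J1 r :: nat and b x Mq \<tau>2 \<kappa> :: real
  assumes J: "J1 + r \<le> Jbar" and b: "1 \<le> b * 4^r" "b > 0" and x: "x > ln 2"
    and M: "0 \<le> Mq" "Mq \<le> exp (x / 2)" and \<kappa>: "\<kappa> \<ge> 0" and \<tau>: "\<tau>2 \<ge> 0"
  shows "(\<Sum>j\<in>{2..J1}. \<kappa> * \<tau>2 * 4^(Jbar - j) * (Mq * exp (- (b * x * 4^(Jbar - j))))) \<le> 100 * \<kappa> * 4^r * \<tau>2"
proof -
  have l2: "ln 2 \<ge> (1/2::real)" using ln_le_minus_one[of "1/2"] by (simp add: ln_div)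
  have xh: "x > 1/2" using x l2 by linarith
  have tm: "\<kappa> * \<tau>2 * 4^(Jbar - j) * (Mq * exp (- (b * x * 4^(Jbar - j)))) \<le> 64 * \<kappa> * \<tau>2 * 4^r * (1/4)^(J1 - j)"
    if j: "j \<in> {2..J1}" for j
  proof -
    define s where "s = Jbar - j"
    have sr: "s \<ge> r" "s - r \<ge> J1 - j" using j J unfolding s_def by auto
    define P where "P = (4::real)^(s - r)"
    have P1: "P \<ge> 1" unfolding P_def by simp
    have 4: "(4::real)^s = 4^r * P" unfolding P_def using sr by (simp flip: power_add)
    have "b * 4^s = (b * 4^r) * P" unfolding 4 by (simp add: mult.assoc)
    moreover have "(b * 4^r) * P \<ge> 1 * P" using b P1 by (intro mult_right_mono) auto
    ultimately have bP: "b * 4^s \<ge> P" by (simp only: mult_1)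
    have "Mq * exp (- (b * x * 4^s)) \<le> exp (x / 2) * exp (- (b * x * 4^s))" using M by (intro mult_right_mono) auto
    also have "\<dots> = exp (x / 2 - b * x * 4^s)" by (simp only: diff_conv_add_uminus exp_add)
    also have "\<dots> \<le> exp (- (x * P / 2))"
    proof -
      have "x * P \<le> b * x * 4^s" using bP xh by (simp add: mult.commute mult.left_commute mult_left_mono)
      moreover have "x / 2 \<le> x * P / 2" using P1 xh by simp
      ultimately show ?thesis by simp
    qed
    also have "\<dots> \<le> 4 / (x * P / 2)^2" by (rule exp_neg_le) (use xh P1 in simp)
    also have "\<dots> = 16 / (x^2 * P^2)" by (simp add: power_mult_distrib power_divide)
    also have "\<dots> \<le> 64 / P^2"
    proof -
      have "(1/2::real)^2 \<le> x^2" using xh by (intro power_mono) auto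
      then have "x^2 \<ge> 1/4" by (simp add: power2_eq_square)
      then have xx: "16 / x^2 \<le> 64" using xh by (simp add: divide_le_eq)
      have "16 / (x^2 * P^2) = (16 / x^2) / P^2" by simp
      also have "\<dots> \<le> 64 / P^2" by (rule divide_right_mono[OF xx]) simp
      finally show ?thesis .
    qed
    finally have E: "Mq * exp (- (b * x * 4^s)) \<le> 64 / P^2" .
    have "\<kappa> * \<tau>2 * 4^s * (Mq * exp (- (b * x * 4^s))) \<le> \<kappa> * \<tau>2 * 4^s * (64 / P^2)"
      using E \<kappa> \<tau> by (intro mult_left_mono) auto
    also have "\<dots> = 64 * \<kappa> * \<tau>2 * 4^r * (1 / P)" unfolding 4 using P1 by (simp add: power2_eq_square)
    also have "1 / P \<le> (1/4)^(J1 - j)"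
    proof -
      have "(4::real)^(J1 - j) \<le> P" unfolding P_def using sr by (intro power_increasing) auto
      then show ?thesis using P1 by (simp add: power_one_over field_simps)
    qed
    then have "64 * \<kappa> * \<tau>2 * 4^r * (1 / P) \<le> 64 * \<kappa> * \<tau>2 * 4^r * (1/4)^(J1 - j)"
      using \<kappa> \<tau> by (intro mult_left_mono) auto
    finally show ?thesis unfolding s_def .
  qed
  have "(\<Sum>j\<in>{2..J1}. \<kappa> * \<tau>2 * 4^(Jbar - j) * (Mq * exp (- (b * x * 4^(Jbar - j))))) \<le>
      (\<Sum>j\<in>{2..J1}. 64 * \<kappa> * \<tau>2 * 4^r * (1/4)^(J1 - j))" by (rule sum_mono) (rule tm)
  also have "\<dots> = 64 * \<kappa> * \<tau>2 * 4^r * (\<Sum>j\<in>{2..J1}. (1/4)^(J1 - j))" by (simp add: sum_distrib_left)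
  also have "\<dots> \<le> 64 * \<kappa> * \<tau>2 * 4^r * (4/3)" using geo4 \<kappa> \<tau> by (intro mult_left_mono) auto
  also have "\<dots> \<le> 100 * \<kappa> * 4^r * \<tau>2" using \<kappa> \<tau> by (simp add: mult_nonneg_nonneg)
  finally show ?thesis .
qed

context tctx begin

lemma ustar_prop:
  assumes j: "2 \<le> j" "j \<le> Jt" and q: "q \<in> Lv (j - 1)" and f: "f \<in> F" and qf: "L2dist \<mu> q f \<le> d / 2^(j - 2)"
  shows "ustarG \<mu> off f d c j q \<in> off j q \<and> L2dist \<mu> (ustarG \<mu> off f d c j q) f \<le> d / (2^(j - 2) * c)"
proof -
  from off_good[OF j q f qf] have "\<exists>u. u \<in> off j q \<and> L2dist \<mu> u f \<le> d / (2^(j - 2) * c)" by blast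
  then show ?thesis unfolding ustarG_def by (rule someI_ex)
qed

lemma path_Lv:
  assumes path: "estimator_path \<mu> N k G C' c d Jt \<nu>1 off X \<nu>"
  shows "1 \<le> j \<Longrightarrow> j \<le> Jt \<Longrightarrow> \<nu> j \<in> Lv j"
proof (induction j rule: nat_induct_at_least)
  case base then show ?case using path Lv1 unfolding estimator_path_def by auto
next
  case (Suc n)
  have "2 \<le> Suc n" "Suc n \<le> Jt" using Suc by auto
  then have sel: "selected \<mu> N k G X C' (d / (2^(Suc n - 2) * c)) (off (Suc n) (\<nu> (Suc n - 1))) (\<nu> (Suc n))"
    using path unfolding estimator_path_def by blast
  then have "\<nu> (Suc n) \<in> off (Suc n) (\<nu> n)" unfolding selected_def by simp
  moreover have "\<nu> n \<in> Lv (Suc n - 1)" using Suc by auto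
  ultimately show ?case using off_Lv[of "Suc n" "\<nu> n"] Suc by auto
qed

end

locale mctx = tctx \<mu> F B \<alpha> \<beta> d c \<nu>1 Jt Lv off
  for \<mu> :: "'a measure" and F B \<alpha> \<beta> d c \<nu>1 Jt Lv off +
  fixes f N k \<epsilon> G A est J1 M'
  assumes fF: "f \<in> F" and c4: "c \<ge> 4" and dpos: "d > 0"
    and J1: "1 \<le> J1" "J1 \<le> Jt"
    and Mfin': "\<forall>j. 2 \<le> j \<and> j \<le> J1 \<longrightarrow> loc_entropy \<mu> F (d / 2^(j - 2)) (2 * c) \<noteq> \<infinity> \<and>
                   the_enat (loc_entropy \<mu> F (d / 2^(j - 2)) (2 * c)) \<le> M'"
    and k: "0 < k" "k dvd N" and eps: "0 < \<epsilon>" "real k = 1 / (3 * \<epsilon>)"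
    and Gu: "(\<Union>j<N div k. G j) = {..<N}" and Gc: "\<forall>j<N div k. card (G j) = k"
    and Gd: "\<forall>i<N div k. \<forall>j<N div k. i \<noteq> j \<longrightarrow> G i \<inter> G j = {}"
    and Acor: "\<forall>x\<in>space (PiM {..<N} (\<lambda>_. density \<mu> (\<lambda>x. ennreal (f x)))). (\<forall>i<N. A x i \<in> B) \<and>
              real (card {i\<in>{..<N}. A x i \<noteq> x i}) \<le> \<epsilon> * real N"
    and pathH: "\<forall>X. (\<forall>i<N. X i \<in> B) \<longrightarrow> estimator_path \<mu> N k G (c / 2 - 1) c d Jt \<nu>1 off X (est X)"
    and Cbig: "c / 2 - 1 \<ge> 8 * \<beta> + 2 * \<beta> / \<alpha>^2"
    and cond: "\<forall>j\<in>{2..J1}. 3 * \<epsilon> * ln 2 \<le> (c / 2 - 1)^2 * (d / (2^(j - 2) * c))^2 / (192 * \<beta>)"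
begin

abbreviation "Pm \<equiv> PiM {..<N} (\<lambda>_. density \<mu> (\<lambda>x. ennreal (f x)))"
abbreviation "m \<equiv> N div k"
definition "t = nat \<lceil>real m / 6\<rceil>"
definition "Qs j = Lv (j - 1) \<inter> L2ball \<mu> f (d / 2^(j - 2))"
definition "us j q = ustarG \<mu> off f d c j q"
definition "Vs j q = {v\<in>off j q. (c / 2 - 1) * (d / (2^(j - 2) * c)) \<le> L2dist \<mu> (us j q) v}"
definition "Zt j q v x = (\<Sum>S\<in>{S. S \<subseteq> {..<m} \<and> card S = t}. \<Prod>i\<in>\<Union>(G ` S). ennreal (sqrt (v (x i) / us j q (x i))))"
definition "Z j x = (\<Sum>q\<in>Qs j. \<Sum>v\<in>Vs j q. Zt j q v x)"
definition "gm x = ennreal (25 * d^2 / 4^(J1 - 1)) + (\<Sum>j\<in>{2..J1}. ennreal (25 * d^2 / 4^(j - 2)) * Z j x)"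

lemma spPm: "x \<in> space Pm \<Longrightarrow> i < N \<Longrightarrow> x i \<in> B"
  using sp by (auto simp: space_PiM PiE_def Pi_def)

lemma GN: "\<forall>g<m. G g \<subseteq> {..<N}" using Gu by blast

lemma mk: "m * k = N" using k by simp

lemma Gfin: "\<forall>g<m. finite (G g)" using Gc k by (metis card_ge_0_finite)

lemma Q_props:
  assumes j: "2 \<le> j" "j \<le> J1"
  shows "finite (Qs j) \<and> card (Qs j) \<le> M'"
proof -
  have "j - 1 \<le> Jt" using j J1 by auto
  from Q_card[OF j(1) this fF] Mfin' j show ?thesis unfolding Qs_def by force
qed

lemma q_props:
  assumes j: "2 \<le> j" "j \<le> J1" and q: "q \<in> Qs j"
  shows "us j q \<in> off j q \<and> L2dist \<mu> (us j q) f \<le> d / (2^(j - 2) * c) \<and> us j q \<in> F \<and>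
         finite (off j q) \<and> card (off j q) \<le> M' \<and> off j q \<subseteq> F"
proof -
  have jt: "j \<le> Jt" using j J1 by auto
  have q1: "q \<in> Lv (j - 1)" and qf: "L2dist \<mu> q f \<le> d / 2^(j - 2)" using q unfolding Qs_def L2ball_def
    by (auto simp: L2dist_sym)
  have u: "us j q \<in> off j q" "L2dist \<mu> (us j q) f \<le> d / (2^(j - 2) * c)"
    using ustar_prop[OF j(1) jt q1 fF qf] unfolding us_def by auto
  have oF: "off j q \<subseteq> F" using off_F[OF j(1) jt q1] .
  have "finite (off j q) \<and> card (off j q) \<le> the_enat (loc_entropy \<mu> F (d / 2^(j - 2)) (2 * c))"
    using off_card[OF j(1) jt q1] Mfin' j by auto
  then show ?thesis using u oF Mfin' j by force
qed

lemma Vs_props: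
  assumes j: "2 \<le> j" "j \<le> J1" and q: "q \<in> Qs j"
  shows "finite (Vs j q) \<and> card (Vs j q) \<le> M' \<and> Vs j q \<subseteq> F"
proof -
  have "Vs j q \<subseteq> off j q" unfolding Vs_def by auto
  then show ?thesis using q_props[OF j q] by (meson card_mono finite_subset le_trans subset_trans)
qed

lemma pos_vals:
  assumes x: "x \<in> space Pm" and u: "u \<in> F" and v: "v \<in> F"
  shows "\<forall>g<m. \<forall>i\<in>G g. u (x i) > 0 \<and> v (x i) > 0"
proof (intro allI impI ballI)
  fix g i assume "g < m" "i \<in> G g"
  then have "i < N" using GN by auto
  then have "x i \<in> B" using spPm[OF x] by auto
  then show "u (x i) > 0 \<and> v (x i) > 0" using u v Fd ap unfolding dens_class_def by force
qed

lemma pointwise: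
  assumes x: "x \<in> space Pm"
  shows "ennreal ((L2dist \<mu> (est (A x) Jt) f)^2) \<le> gm x"
proof -
  have XB: "\<forall>i<N. A x i \<in> B" using Acor x by auto
  have pc: "pctx \<mu> F B \<alpha> \<beta> d c \<nu>1 Jt Lv off f N k G (A x) (est (A x)) J1"
    unfolding pctx_def pctx_axioms_def
    using tctx_axioms fF c4 dpos J1 Mfin' k XB GN pathH by blast
  define w where "w = (\<lambda>j::nat. 25 * d^2 / 4^(j - 2))"
  define FL where "FL = (\<lambda>j. \<exists>q \<in> Lv (j - 1) \<inter> L2ball \<mu> f (d / 2^(j - 2)). \<exists>v\<in>off j q.
      L2dist \<mu> (ustarG \<mu> off f d c j q) v \<ge> (c / 2 - 1) * (d / (2^(j - 2) * c)) \<and> \<not> good N k G (A x) (ustarG \<mu> off f d c j q) v)"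
  have pb: "(L2dist \<mu> (est (A x) Jt) f)^2 \<le> 25 * d^2 / 4^(J1 - 1) + (\<Sum>j\<in>{2..J1}. (if FL j then w j else 0))"
    using pctx.path_bound2[OF pc] unfolding FL_def w_def .
  have each: "ennreal (if FL j then w j else 0) \<le> ennreal (w j) * Z j x" if j: "j \<in> {2..J1}" for j
  proof (cases "FL j")
    case False then show ?thesis by simp
  next
    case True
    then obtain q v where q: "q \<in> Qs j" and v: "v \<in> off j q"
      and far: "L2dist \<mu> (us j q) v \<ge> (c / 2 - 1) * (d / (2^(j - 2) * c))"
      and ng: "\<not> good N k G (A x) (us j q) v"
      unfolding FL_def Qs_def us_def by blast
    have j2: "2 \<le> j" "j \<le> J1" using j by auto
    have vV: "v \<in> Vs j q" unfolding Vs_def using v far by auto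
    have qp: "us j q \<in> F" using q_props[OF j2 q] by blast
    have vF: "v \<in> F" using q_props[OF j2 q] v by blast
    have cx: "real (card {i\<in>{..<N}. A x i \<noteq> x i}) \<le> \<epsilon> * real N" using Acor x by blast
    have c6: "real (card {g\<in>{..<m}. \<not> Pz G (us j q) v x g}) \<ge> real m / 6"
      by (rule corrupt[OF k eps Gd cx GN ng])
    have tle: "t \<le> card {g\<in>{..<m}. \<not> Pz G (us j q) v x g}"
      unfolding t_def using c6 by (simp add: nat_le_iff ceiling_le_iff)
    have "1 \<le> Zt j q v x" unfolding Zt_def
      by (rule zmaj[OF _ Gfin pos_vals[OF x qp vF] tle]) (use Gd in blast)
    also have "\<dots> \<le> (\<Sum>v\<in>Vs j q. Zt j q v x)"
      by (rule member_le_sum) (use vV Vs_props[OF j2 q] in auto)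
    also have "\<dots> \<le> Z j x" unfolding Z_def
      by (rule member_le_sum[where f="\<lambda>q. \<Sum>v\<in>Vs j q. Zt j q v x"]) (use q Q_props[OF j2] in auto)
    finally have "1 \<le> Z j x" .
    then have "ennreal (w j) * 1 \<le> ennreal (w j) * Z j x" by (intro mult_left_mono) auto
    then show ?thesis using True by simp
  qed
  have w0: "\<And>j. 0 \<le> (if FL j then w j else 0)" unfolding w_def by simp
  have "ennreal ((L2dist \<mu> (est (A x) Jt) f)^2) \<le> ennreal (25 * d^2 / 4^(J1 - 1) + (\<Sum>j\<in>{2..J1}. (if FL j then w j else 0)))"
    using pb by (rule ennreal_leI)
  also have "\<dots> = ennreal (25 * d^2 / 4^(J1 - 1)) + (\<Sum>j\<in>{2..J1}. ennreal (if FL j then w j else 0))"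
    using w0 by (simp add: sum_nonneg)
  also have "\<dots> \<le> ennreal (25 * d^2 / 4^(J1 - 1)) + (\<Sum>j\<in>{2..J1}. ennreal (w j) * Z j x)"
    by (intro add_left_mono sum_mono each) auto
  finally show ?thesis unfolding gm_def w_def .
qed

lemma h_meas:
  assumes u: "u \<in> F" and v: "v \<in> F"
  shows "(\<lambda>z. sqrt (v z / u z)) \<in> borel_measurable (density \<mu> (\<lambda>x. ennreal (f x)))"
proof -
  have hb: "bm \<mu> (\<lambda>z. sqrt (v z / u z))" using sqrt_ratio_bm[OF sp ap] u v Fd by blast
  have e: "borel_measurable (density \<mu> (\<lambda>x. ennreal (f x))) = borel_measurable \<mu>" by (rule measurable_cong_sets) auto
  have "(\<lambda>z. sqrt (v z / u z)) \<in> borel_measurable \<mu>" using hb unfolding bm_def by blast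
  then show ?thesis by (simp only: e)
qed

lemma Zt_meas:
  assumes u: "us j q \<in> F" and v: "v \<in> F"
  shows "Zt j q v \<in> borel_measurable Pm"
  unfolding Zt_def
proof (rule borel_measurable_sum)
  fix S assume S: "S \<in> {S. S \<subseteq> {..<m} \<and> card S = t}"
  have "\<Union>(G ` S) \<subseteq> {..<N}" using S GN by auto
  then show "(\<lambda>x. \<Prod>i\<in>\<Union>(G ` S). ennreal (sqrt (v (x i) / us j q (x i)))) \<in> borel_measurable Pm"
    by (rule prod_meas[OF h_meas[OF u v]])
qed

lemma Z_meas: assumes j: "2 \<le> j" "j \<le> J1" shows "Z j \<in> borel_measurable Pm"
  unfolding Z_def
proof (rule borel_measurable_sum, rule borel_measurable_sum)
  fix q v assume q: "q \<in> Qs j" and v: "v \<in> Vs j q"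
  show "Zt j q v \<in> borel_measurable Pm" using Zt_meas q_props[OF j q] Vs_props[OF j q] v by blast
qed

lemma gm_meas: "gm \<in> borel_measurable Pm"
  unfolding gm_def
  by (intro borel_measurable_add borel_measurable_const borel_measurable_sum borel_measurable_times_ennreal Z_meas) auto

lemma Zt_int:
  assumes j: "2 \<le> j" "j \<le> J1" and q: "q \<in> Qs j" and v: "v \<in> Vs j q"
  shows "(\<integral>\<^sup>+ x. Zt j q v x \<partial>Pm) \<le> ennreal (exp (- (real N * (c / 2 - 1)^2 * (d / (2^(j - 2) * c))^2 / (192 * \<beta>))))"
  unfolding Zt_def
proof (rule pair_int[OF ps sp ap])
  show "f \<in> dens_class \<mu> B \<alpha> \<beta>" using fF Fd by auto
  show "us j q \<in> dens_class \<mu> B \<alpha> \<beta>" using q_props[OF j q] Fd by auto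
  show "v \<in> dens_class \<mu> B \<alpha> \<beta>" using Vs_props[OF j q] v Fd by auto
  show "c / 2 - 1 \<ge> 8 * \<beta> + 2 * \<beta> / \<alpha>^2" by (rule Cbig)
  show "d / (2^(j - 2) * c) \<ge> 0" using dpos cp by simp
  show "L2dist \<mu> (us j q) f \<le> d / (2^(j - 2) * c)" using q_props[OF j q] by blast
  show "L2dist \<mu> (us j q) v \<ge> (c / 2 - 1) * (d / (2^(j - 2) * c))" using v unfolding Vs_def by auto
  show "\<forall>i<m. \<forall>j<m. i \<noteq> j \<longrightarrow> G i \<inter> G j = {}" using Gd by blast
  show "\<forall>g<m. card (G g) = k" "k > 0" using Gc k by auto
  show "\<forall>g<m. G g \<subseteq> {..<N}" by (rule GN)
  show "m * k = N" by (rule mk)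
  show "real m * ln 2 \<le> real N * (c / 2 - 1)^2 * (d / (2^(j - 2) * c))^2 / (192 * \<beta>)"
  proof -
    have mr: "real m = 3 * \<epsilon> * real N" using k eps by (simp add: real_of_nat_div field_simps)
    have "3 * \<epsilon> * ln 2 \<le> (c / 2 - 1)^2 * (d / (2^(j - 2) * c))^2 / (192 * \<beta>)" using cond j by auto
    then have "real N * (3 * \<epsilon> * ln 2) \<le> real N * ((c / 2 - 1)^2 * (d / (2^(j - 2) * c))^2 / (192 * \<beta>))"
      by (intro mult_left_mono) auto
    then show ?thesis unfolding mr by (simp add: mult_ac)
  qed
  show "real t \<ge> real m / 6" unfolding t_def by linarith
qed

lemma Z_int:
  assumes j: "2 \<le> j" "j \<le> J1"
  shows "(\<integral>\<^sup>+ x. Z j x \<partial>Pm) \<le> ennreal (real M' ^ 2 * exp (- (real N * (c / 2 - 1)^2 * (d / (2^(j - 2) * c))^2 / (192 * \<beta>))))"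
proof -
  define e where "e = exp (- (real N * (c / 2 - 1)^2 * (d / (2^(j - 2) * c))^2 / (192 * \<beta>)))"
  have "(\<integral>\<^sup>+ x. Z j x \<partial>Pm) = (\<Sum>q\<in>Qs j. \<integral>\<^sup>+ x. (\<Sum>v\<in>Vs j q. Zt j q v x) \<partial>Pm)"
    unfolding Z_def
  proof (rule nn_integral_sum)
    fix q assume q: "q \<in> Qs j"
    show "(\<lambda>x. \<Sum>v\<in>Vs j q. Zt j q v x) \<in> borel_measurable Pm"
      using Zt_meas q_props[OF j q] Vs_props[OF j q] by (intro borel_measurable_sum) blast
  qed
  also have "\<dots> = (\<Sum>q\<in>Qs j. \<Sum>v\<in>Vs j q. \<integral>\<^sup>+ x. Zt j q v x \<partial>Pm)"
  proof (rule sum.cong[OF refl], rule nn_integral_sum)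
    fix q v assume q: "q \<in> Qs j" and v: "v \<in> Vs j q"
    show "Zt j q v \<in> borel_measurable Pm" using Zt_meas q_props[OF j q] Vs_props[OF j q] v by blast
  qed
  also have "\<dots> \<le> (\<Sum>q\<in>Qs j. \<Sum>v\<in>Vs j q. ennreal e)"
    unfolding e_def by (intro sum_mono Zt_int[OF j]) auto
  also have "\<dots> = (\<Sum>q\<in>Qs j. of_nat (card (Vs j q)) * ennreal e)" by simp
  also have "\<dots> \<le> (\<Sum>q\<in>Qs j. of_nat M' * ennreal e)"
    by (intro sum_mono mult_right_mono) (use Vs_props[OF j] in auto)
  also have "\<dots> = of_nat (card (Qs j)) * (of_nat M' * ennreal e)" by simp
  also have "\<dots> \<le> of_nat M' * (of_nat M' * ennreal e)"
    by (intro mult_right_mono) (use Q_props[OF j] in auto)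
  also have "\<dots> = ennreal (real M' ^ 2 * e)"
    unfolding e_def by (simp add: ennreal_mult' ennreal_of_nat_eq_real_of_nat power2_eq_square mult.assoc)
  finally show ?thesis unfolding e_def .
qed

lemma gm_int:
  "(\<integral>\<^sup>+ x. gm x \<partial>Pm) \<le> ennreal (25 * d^2 / 4^(J1 - 1) + (\<Sum>j\<in>{2..J1}. 25 * d^2 / 4^(j - 2) *
      (real M' ^ 2 * exp (- (real N * (c / 2 - 1)^2 * (d / (2^(j - 2) * c))^2 / (192 * \<beta>))))))"
proof -
  define a where "a = (\<lambda>j::nat. 25 * d^2 / 4^(j - 2))"
  define b where "b = (\<lambda>j::nat. real M' ^ 2 * exp (- (real N * (c / 2 - 1)^2 * (d / (2^(j - 2) * c))^2 / (192 * \<beta>))))"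
  have a0: "\<And>j. a j \<ge> 0" unfolding a_def by simp
  have b0: "\<And>j. b j \<ge> 0" unfolding b_def by simp
  have zm: "\<And>j. j \<in> {2..J1} \<Longrightarrow> (\<lambda>x. ennreal (a j) * Z j x) \<in> borel_measurable Pm"
    using Z_meas by (intro borel_measurable_times_ennreal borel_measurable_const) auto
  have gme: "gm = (\<lambda>x. ennreal (25 * d^2 / 4^(J1 - 1)) + (\<Sum>j\<in>{2..J1}. ennreal (a j) * Z j x))"
    unfolding gm_def a_def by simp
  have sm: "(\<lambda>x. \<Sum>j\<in>{2..J1}. ennreal (a j) * Z j x) \<in> borel_measurable Pm"
    by (rule borel_measurable_sum) (rule zm)
  have e1: "emeasure Pm (space Pm) = 1"
  proof -
    have "prob_space (density \<mu> (\<lambda>x. ennreal (f x)))" using dens_prob[OF ps sp ap] fF Fd by auto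
    then interpret P: product_prob_space "\<lambda>_::nat. density \<mu> (\<lambda>x. ennreal (f x))" "{..<N}"
      by (intro product_prob_spaceI)
    show ?thesis by (rule P.P.emeasure_space_1)
  qed
  have G1: "(\<integral>\<^sup>+ x. gm x \<partial>Pm) = (\<integral>\<^sup>+ x. ennreal (25 * d^2 / 4^(J1 - 1)) \<partial>Pm) +
       (\<integral>\<^sup>+ x. (\<Sum>j\<in>{2..J1}. ennreal (a j) * Z j x) \<partial>Pm)"
    unfolding gme by (rule nn_integral_add) (simp_all add: sm)
  have G2: "(\<integral>\<^sup>+ x. ennreal (25 * d^2 / 4^(J1 - 1)) \<partial>Pm) = ennreal (25 * d^2 / 4^(J1 - 1))"
    using e1 by simp
  have "(\<integral>\<^sup>+ x. (\<Sum>j\<in>{2..J1}. ennreal (a j) * Z j x) \<partial>Pm)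
       = (\<Sum>j\<in>{2..J1}. \<integral>\<^sup>+ x. ennreal (a j) * Z j x \<partial>Pm)"
    by (rule nn_integral_sum) (rule zm)
  also have "\<dots> = (\<Sum>j\<in>{2..J1}. ennreal (a j) * (\<integral>\<^sup>+ x. Z j x \<partial>Pm))"
  proof (rule sum.cong[OF refl])
    fix j assume "j \<in> {2..J1}"
    then have "Z j \<in> borel_measurable Pm" using Z_meas by auto
    then show "(\<integral>\<^sup>+ x. ennreal (a j) * Z j x \<partial>Pm) = ennreal (a j) * (\<integral>\<^sup>+ x. Z j x \<partial>Pm)"
      by (rule nn_integral_cmult)
  qed
  also have "\<dots> \<le> (\<Sum>j\<in>{2..J1}. ennreal (a j) * ennreal (b j))"
  proof (rule sum_mono)
    fix j assume "j \<in> {2..J1}"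
    then have "2 \<le> j" "j \<le> J1" by auto
    from Z_int[OF this] have "(\<integral>\<^sup>+ x. Z j x \<partial>Pm) \<le> ennreal (b j)" unfolding b_def .
    then show "ennreal (a j) * (\<integral>\<^sup>+ x. Z j x \<partial>Pm) \<le> ennreal (a j) * ennreal (b j)"
      by (rule mult_left_mono) simp
  qed
  also have "\<dots> = (\<Sum>j\<in>{2..J1}. ennreal (a j * b j))"
    by (rule sum.cong[OF refl]) (rule ennreal_mult[symmetric, OF a0 b0])
  also have "\<dots> = ennreal (\<Sum>j\<in>{2..J1}. a j * b j)"
    by (rule sum_ennreal) (simp add: a0 b0)
  finally have G3: "(\<integral>\<^sup>+ x. (\<Sum>j\<in>{2..J1}. ennreal (a j) * Z j x) \<partial>Pm) \<le> ennreal (\<Sum>j\<in>{2..J1}. a j * b j)" .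
  have G4: "ennreal (25 * d^2 / 4^(J1 - 1)) + ennreal (\<Sum>j\<in>{2..J1}. a j * b j)
      = ennreal (25 * d^2 / 4^(J1 - 1) + (\<Sum>j\<in>{2..J1}. a j * b j))"
    by (rule ennreal_plus[symmetric]) (auto intro!: sum_nonneg simp: a0 b0)
  have "(\<integral>\<^sup>+ x. gm x \<partial>Pm) \<le> ennreal (25 * d^2 / 4^(J1 - 1)) + ennreal (\<Sum>j\<in>{2..J1}. a j * b j)"
    unfolding G1 G2 by (rule add_left_mono[OF G3])
  then have "(\<integral>\<^sup>+ x. gm x \<partial>Pm) \<le> ennreal (25 * d^2 / 4^(J1 - 1) + (\<Sum>j\<in>{2..J1}. a j * b j))"
    by (simp only: G4)
  then show ?thesis by (simp only: a_def b_def)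
qed

end

lemma tau_sq:
  assumes c: "c > 0" and C: "C10' > 0" and J: "J \<ge> 1"
  shows "(tauJ C10' (c / 2 - 1) d J)^2 = 4 * C10' * d^2 / (4^(J - 1) * c^2)"
proof -
  have "tauJ C10' (c / 2 - 1) d J = sqrt C10' * d / (2^(J - 1) * (c / 2))" unfolding tauJ_def by simp
  then have "(tauJ C10' (c / 2 - 1) d J)^2 = (sqrt C10')^2 * d^2 / ((2^(J - 1))^2 * (c / 2)^2)"
    by (simp add: power_divide power_mult_distrib)
  also have "(sqrt C10')^2 = C10'" using C by simp
  also have "((2::real)^(J - 1))^2 = 4^(J - 1)"
  proof -
    have "(2::real)^(J - 1) * 2^(J - 1) = 4^(J - 1)" by (simp flip: power_mult_distrib)
    then show ?thesis by (simp add: power2_eq_square)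
  qed
  finally show ?thesis by (simp add: power_divide field_simps)
qed

lemma tau_c:
  assumes c: "c > 0" and C: "C10' > 0" and J: "J \<ge> 2"
  shows "tauJ C10' (c / 2 - 1) d J * c / sqrt C10' = d / 2^(J - 2)"
proof -
  have p: "(2::real)^(J - 1) = 2 * 2^(J - 2)" using J by (cases J; cases "J - 1") auto
  have s: "sqrt C10' > 0" using C by simp
  have "tauJ C10' (c / 2 - 1) d J * c / sqrt C10' = sqrt C10' * d / (2^(J - 1) * (c / 2)) * c / sqrt C10'"
    unfolding tauJ_def by simp
  also have "\<dots> = d / 2^(J - 2)" unfolding p using s c by (simp add: field_simps)
  finally show ?thesis .
qed

lemma pow4a: "2 \<le> j \<Longrightarrow> j \<le> J \<Longrightarrow> (4::real)^(j - 2) * 4^(J - j) = 4^(J - 2)"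
  by (simp flip: power_add)

lemma pow4b: "2 \<le> J \<Longrightarrow> (4::real)^(J - 1) = 4 * 4^(J - 2)"
  by (cases J; cases "J - 1") auto

lemma term_id:
  assumes c: "c > 0" and C: "C10' > 0" and j: "2 \<le> j" "j \<le> J"
  shows "d^2 / 4^(j - 2) = c^2 / C10' * (tauJ C10' (c / 2 - 1) d J)^2 * 4^(J - j)"
proof -
  have J: "J \<ge> 1" "J \<ge> 2" using j by auto
  have "c^2 / C10' * (tauJ C10' (c / 2 - 1) d J)^2 * 4^(J - j) = c^2 / C10' * (4 * C10' * d^2 / (4^(J - 1) * c^2)) * 4^(J - j)"
    unfolding tau_sq[OF c C J(1)] ..
  also have "\<dots> = 4 * d^2 * 4^(J - j) / 4^(J - 1)" using c C by (simp add: field_simps)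
  also have "\<dots> = 4 * d^2 * 4^(J - j) / (4 * (4^(j - 2) * 4^(J - j)))" unfolding pow4b[OF J(2)] pow4a[OF j] ..
  also have "\<dots> = d^2 / 4^(j - 2)" by (simp add: field_simps)
  finally show ?thesis ..
qed

lemma delta_id:
  assumes c: "c > 0" and C: "C10' > 0" and j: "2 \<le> j" "j \<le> J"
  shows "(d / (2^(j - 2) * c))^2 = (tauJ C10' (c / 2 - 1) d J)^2 * 4^(J - j) / C10'"
proof -
  have q: "(2::real)^(j - 2) * 2^(j - 2) = 4^(j - 2)" by (simp flip: power_mult_distrib)
  have "(d / (2^(j - 2) * c))^2 = d^2 / ((2^(j - 2) * 2^(j - 2)) * c^2)"
    by (simp add: power_divide power_mult_distrib power2_eq_square)
  also have "\<dots> = d^2 / 4^(j - 2) / c^2" unfolding q by simp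
  also have "\<dots> = c^2 / C10' * (tauJ C10' (c / 2 - 1) d J)^2 * 4^(J - j) / c^2" unfolding term_id[OF c C j] ..
  also have "\<dots> = (tauJ C10' (c / 2 - 1) d J)^2 * 4^(J - j) / C10'" using c by (simp add: field_simps)
  finally show ?thesis .
qed

lemma outer_le:
  assumes g: "g \<in> borel_measurable M" and le: "\<forall>x\<in>space M. ennreal (h x) \<le> g x"
  shows "outer_exp M h \<le> integral\<^sup>N M g"
  unfolding outer_exp_def by (rule INF_lower) (use g le in auto)

lemma final_real:
  fixes Tot d2 Kc K m :: real
  assumes "Tot \<le> K * m" "K \<ge> 0" "Kc \<ge> 1 + K" "m \<ge> 0" "d2 \<ge> 0"
  shows "min d2 Tot \<le> Kc * min m d2"
proof (cases "m \<le> d2")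
  case True
  have "min d2 Tot \<le> K * m" using assms by linarith
  also have "\<dots> \<le> Kc * m" using assms by (intro mult_right_mono) auto
  finally show ?thesis using True by simp
next
  case False
  have "min d2 Tot \<le> d2" by simp
  also have "\<dots> \<le> Kc * d2" using assms by (simp add: mult_le_cancel_right1)
  finally show ?thesis using False by simp
qed

context mctx begin

lemma maj_exists:
  "\<exists>g\<in>borel_measurable Pm. (\<forall>x\<in>space Pm. ennreal ((L2dist \<mu> (est (A x) Jt) f)^2) \<le> g x) \<and>
     (\<integral>\<^sup>+ x. g x \<partial>Pm) \<le> ennreal (25 * d^2 / 4^(J1 - 1) + (\<Sum>j\<in>{2..J1}. 25 * d^2 / 4^(j - 2) *
      (real M' ^ 2 * exp (- (real N * (c / 2 - 1)^2 * (d / (2^(j - 2) * c))^2 / (192 * \<beta>))))))"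
  using gm_meas pointwise gm_int by blast

end

definition KC :: "real \<Rightarrow> real \<Rightarrow> real \<Rightarrow> real \<Rightarrow> nat \<Rightarrow> real" where
  "KC c \<alpha> \<beta> \<phi> r = 1 + (25 * 4^r * c^2 / (4 * C10 \<alpha> \<beta> (c / 2 - 1) \<phi>)
      + 25 * 576 * \<beta> * ln 2 * c^2 / (c / 2 - 1)^2 + 100 * (25 * c^2 / C10 \<alpha> \<beta> (c / 2 - 1) \<phi>) * 4^r)"

lemma min_ennreal: "min (ennreal a) (ennreal b) = ennreal (min a b)"
  by (cases "a \<le> b") (auto simp: min_def ennreal_leI ennreal_le_iff2 intro: antisym)

lemma main_body:
  fixes \<mu> :: "'a measure"
  assumes ps: "prob_space \<mu>" and sp: "space \<mu> = B" and ap: "0 < \<alpha>" and ab: "\<alpha> < \<beta>"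
    and Fd: "F \<subseteq> dens_class \<mu> B \<alpha> \<beta>" and st: "star_shaped F" and dd: "d = L2diam \<mu> F"
    and c4: "c \<ge> 4" and Cbig: "c / 2 - 1 \<ge> 8 * \<beta> + 2 * \<beta> / \<alpha>^2"
    and C10p: "C10 \<alpha> \<beta> (c / 2 - 1) \<phi> > 0"
    and rr: "1 \<le> (c / 2 - 1)^2 / (192 * \<beta> * C10 \<alpha> \<beta> (c / 2 - 1) \<phi>) * 4^r"
    and fF: "f \<in> F" and eps: "0 < \<epsilon>" "\<epsilon> \<le> 1/3" and k: "0 < k" "real k = 1 / (3 * \<epsilon>)" "k dvd N"
    and Gu: "(\<Union>j<N div k. G j) = {..<N}" and Gc: "\<forall>j<N div k. card (G j) = k"
    and Gd: "\<forall>i<N div k. \<forall>j<N div k. i \<noteq> j \<longrightarrow> G i \<inter> G j = {}"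
    and Acor: "\<forall>x\<in>space (PiM {..<N} (\<lambda>_. density \<mu> (\<lambda>x. ennreal (f x)))). (\<forall>i<N. A x i \<in> B) \<and>
              real (card {i\<in>{..<N}. A x i \<noteq> x i}) \<le> \<epsilon> * real N"
    and JbarH: "(Jbar = 1 \<and> \<not> (\<exists>J\<ge>1. Jcond \<mu> F (C10 \<alpha> \<beta> (c / 2 - 1) \<phi>) (c / 2 - 1) c d N J)) \<or>
           (1 \<le> Jbar \<and> Jcond \<mu> F (C10 \<alpha> \<beta> (c / 2 - 1) \<phi>) (c / 2 - 1) c d N Jbar \<and>
              (\<forall>J>Jbar. \<not> Jcond \<mu> F (C10 \<alpha> \<beta> (c / 2 - 1) \<phi>) (c / 2 - 1) c d N J))"
    and JJ: "Jbar \<le> Jt" and vt: "valid_tree \<mu> F d c \<nu>1 Jt Lv off"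
    and pathH: "\<forall>X. (\<forall>i<N. X i \<in> B) \<longrightarrow> estimator_path \<mu> N k G (c / 2 - 1) c d Jt \<nu>1 off X (est X)"
  shows "outer_exp (PiM {..<N} (\<lambda>_. density \<mu> (\<lambda>x. ennreal (f x)))) (\<lambda>x. (L2dist \<mu> (est (A x) Jt) f)^2)
          \<le> ennreal (KC c \<alpha> \<beta> \<phi> r * min (max ((tauJ (C10 \<alpha> \<beta> (c / 2 - 1) \<phi>) (c / 2 - 1) d Jbar)^2) \<epsilon>) (d^2))"
proof -
  define C where "C = c / 2 - 1"
  define C10' where "C10' = C10 \<alpha> \<beta> C \<phi>"
  define Pm where "Pm = PiM {..<N} (\<lambda>_. density \<mu> (\<lambda>x. ennreal (f x)))"
  define \<tau> where "\<tau> = tauJ C10' C d Jbar"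
  have bp: "\<beta> > 0" using ap ab by linarith
  have cp: "c > 0" using c4 by linarith
  have C10p': "C10' > 0" using C10p unfolding C10'_def C_def .
  have "2 * \<beta> / \<alpha>^2 \<ge> 0" using bp by simp
  then have Cpos: "C > 0" using Cbig bp unfolding C_def by linarith
  define b where "b = C^2 / (192 * \<beta> * C10')"
  have b: "1 \<le> b * 4^r" "b > 0" using rr Cpos bp C10p' unfolding b_def C_def C10'_def by auto
  define \<kappa> where "\<kappa> = 25 * c^2 / C10'"
  define K1 where "K1 = 25 * 4^r * c^2 / (4 * C10')"
  define K2 where "K2 = 25 * 576 * \<beta> * ln 2 * c^2 / C^2"
  define K3 where "K3 = 100 * \<kappa> * 4^r"
  have KCe: "KC c \<alpha> \<beta> \<phi> r = 1 + (K1 + K2 + K3)" unfolding KC_def K1_def K2_def K3_def \<kappa>_def C10'_def C_def by simp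
  have K0: "K1 \<ge> 0" "K2 \<ge> 0" "K3 \<ge> 0" unfolding K1_def K2_def K3_def \<kappa>_def using C10p' bp by auto
  have Jb1: "1 \<le> Jbar" using JbarH by auto
  have tc: "tctx \<mu> F B \<alpha> \<beta> d c \<nu>1 Jt Lv off" unfolding tctx_def using ps sp ap Fd dd cp vt by blast
  have estF: "est (A x) Jt \<in> F" if x: "x \<in> space Pm" for x
  proof -
    have "\<forall>i<N. A x i \<in> B" using Acor x unfolding Pm_def by auto
    then have path: "estimator_path \<mu> N k G (c / 2 - 1) c d Jt \<nu>1 off (A x) (est (A x))" using pathH by blast
    have "est (A x) Jt \<in> Lv Jt" using tctx.path_Lv[OF tc path] Jb1 JJ by auto
    moreover have "Lv Jt \<subseteq> F" using tctx.Lv_F[OF tc, of Jt] Jb1 JJ by auto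
    ultimately show ?thesis by blast
  qed
  have distd: "L2dist \<mu> (est (A x) Jt) f \<le> d" if "x \<in> space Pm" for x
    using tctx.F_diam[OF tc] estF[OF that] fF by blast
  have d0: "d \<ge> 0" using tctx.d_nonneg[OF tc] .
  show ?thesis
  proof (cases "d = 0")
    case True
    have "outer_exp Pm (\<lambda>x. (L2dist \<mu> (est (A x) Jt) f)^2) \<le> (\<integral>\<^sup>+ x. 0 \<partial>Pm)"
    proof (rule outer_le)
      show "\<forall>x\<in>space Pm. ennreal ((L2dist \<mu> (est (A x) Jt) f)^2) \<le> 0"
      proof
        fix x assume "x \<in> space Pm"
        then have "L2dist \<mu> (est (A x) Jt) f = 0" using distd True L2dist_nonneg[of \<mu>] by (meson order_antisym)
        then show "ennreal ((L2dist \<mu> (est (A x) Jt) f)^2) \<le> 0" by simp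
      qed
    qed simp
    then show ?thesis unfolding Pm_def by simp
  next
    case False
    then have dpos: "d > 0" using d0 by simp
    define cond where "cond = (\<lambda>j::nat. 3 * \<epsilon> * ln 2 \<le> C^2 * (d / (2^(j - 2) * c))^2 / (192 * \<beta>))"
    define S where "S = {j. 1 \<le> j \<and> j \<le> max 1 (Jbar - r) \<and> (\<forall>i\<in>{2..j}. cond i)}"
    define J1 where "J1 = Max S"
    have finS: "finite S" unfolding S_def by (rule finite_subset[of _ "{..max 1 (Jbar - r)}"]) auto
    have "1 \<in> S" unfolding S_def by auto
    then have J1S: "J1 \<in> S" unfolding J1_def using finS by (intro Max_in) auto
    then have J1a: "1 \<le> J1" "J1 \<le> max 1 (Jbar - r)" and condJ: "\<forall>i\<in>{2..J1}. cond i" unfolding S_def by auto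
    have J1b: "J1 \<le> Jbar" "J1 \<le> Jt" using J1a Jb1 JJ by auto
    have jr: "j + r \<le> Jbar" if "j \<in> {2..J1}" for j using that J1a by auto
    have JC: "Jcond \<mu> F C10' C c d N Jbar" if "2 \<le> J1"
    proof -
      have "Jbar \<noteq> 1" using that J1a by auto
      then show ?thesis using JbarH unfolding C10'_def C_def by auto
    qed
    define ME where "ME = loc_entropy \<mu> F (d / 2^(Jbar - 2)) (2 * c)"
    define M' where "M' = (if 2 \<le> J1 then the_enat ME else 0)"
    have tc_eq: "\<tau> * c / sqrt C10' = d / 2^(Jbar - 2)" if "2 \<le> Jbar"
      unfolding \<tau>_def C_def using tau_c[OF cp C10p' that] by simp
    have MEfin: "ME \<noteq> \<infinity>" if "2 \<le> J1"
    proof -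
      have "Jbar \<ge> 2" using that J1b by auto
      from JC[OF that] show ?thesis unfolding Jcond_def Let_def ME_def using tc_eq[OF \<open>Jbar \<ge> 2\<close>]
        unfolding \<tau>_def by simp
    qed
    have Mfin': "\<forall>j. 2 \<le> j \<and> j \<le> J1 \<longrightarrow> loc_entropy \<mu> F (d / 2^(j - 2)) (2 * c) \<noteq> \<infinity> \<and>
                   the_enat (loc_entropy \<mu> F (d / 2^(j - 2)) (2 * c)) \<le> M'"
    proof (intro allI impI)
      fix j assume j: "2 \<le> j \<and> j \<le> J1"
      then have J2: "2 \<le> J1" by auto
      have jb: "j \<le> Jbar" using j J1b by auto
      have le: "loc_entropy \<mu> F (d / 2^(j - 2)) (2 * c) \<le> ME" unfolding ME_def
      proof (rule loc_entropy_mono[OF st])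
        show "0 < d / 2^(Jbar - 2)" using dpos by simp
        have "(2::real)^(j - 2) \<le> 2^(Jbar - 2)" using jb by (intro power_increasing) auto
        then show "d / 2^(Jbar - 2) \<le> d / 2^(j - 2)" using dpos by (intro divide_left_mono) auto
        show "2 * c > 0" using cp by simp
      qed
      have MEf: "ME \<noteq> \<infinity>" by (rule MEfin[OF J2])
      then obtain n where n: "ME = enat n" by auto
      from le n obtain n' where n': "loc_entropy \<mu> F (d / 2^(j - 2)) (2 * c) = enat n'" using enat_ile by blast
      show "loc_entropy \<mu> F (d / 2^(j - 2)) (2 * c) \<noteq> \<infinity> \<and>
                   the_enat (loc_entropy \<mu> F (d / 2^(j - 2)) (2 * c)) \<le> M'"
        using le n n' J2 unfolding M'_def by simp
    qed
    have mc: "mctx \<mu> F B \<alpha> \<beta> d c \<nu>1 Jt Lv off f N k \<epsilon> G A est J1 M'"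
      unfolding mctx_def mctx_axioms_def
      using tc fF c4 dpos J1a(1) J1b(2) Mfin' k eps(1) Gu Gc Gd Acor pathH Cbig condJ
      unfolding cond_def C_def by blast
    define Tot where "Tot = 25 * d^2 / 4^(J1 - 1) + (\<Sum>j\<in>{2..J1}. 25 * d^2 / 4^(j - 2) *
      (real M' ^ 2 * exp (- (real N * (c / 2 - 1)^2 * (d / (2^(j - 2) * c))^2 / (192 * \<beta>)))))"
    obtain g where gm: "g \<in> borel_measurable Pm" and gp: "\<forall>x\<in>space Pm. ennreal ((L2dist \<mu> (est (A x) Jt) f)^2) \<le> g x"
      and gi: "(\<integral>\<^sup>+ x. g x \<partial>Pm) \<le> ennreal Tot"
      using mctx.maj_exists[OF mc] unfolding Pm_def Tot_def by blast
    have probPm: "emeasure Pm (space Pm) = 1"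
    proof -
      have "prob_space (density \<mu> (\<lambda>x. ennreal (f x)))" using dens_prob[OF ps sp ap] fF Fd by auto
      then interpret P: product_prob_space "\<lambda>_::nat. density \<mu> (\<lambda>x. ennreal (f x))" "{..<N}"
        by (intro product_prob_spaceI)
      show ?thesis unfolding Pm_def by (rule P.P.emeasure_space_1)
    qed
    define g2 where "g2 = (\<lambda>x. min (ennreal (d^2)) (g x))"
    have "outer_exp Pm (\<lambda>x. (L2dist \<mu> (est (A x) Jt) f)^2) \<le> (\<integral>\<^sup>+ x. g2 x \<partial>Pm)"
    proof (rule outer_le)
      show "g2 \<in> borel_measurable Pm" unfolding g2_def using gm by measurable
      show "\<forall>x\<in>space Pm. ennreal ((L2dist \<mu> (est (A x) Jt) f)^2) \<le> g2 x"
      proof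
        fix x assume x: "x \<in> space Pm"
        have "(L2dist \<mu> (est (A x) Jt) f)^2 \<le> d^2" using distd[OF x] L2dist_nonneg[of \<mu>] by (intro power_mono) auto
        then have "ennreal ((L2dist \<mu> (est (A x) Jt) f)^2) \<le> ennreal (d^2)" by (rule ennreal_leI)
        then show "ennreal ((L2dist \<mu> (est (A x) Jt) f)^2) \<le> g2 x" unfolding g2_def using gp x by simp
      qed
    qed
    also have "(\<integral>\<^sup>+ x. g2 x \<partial>Pm) \<le> min (ennreal (d^2)) (ennreal Tot)"
    proof (rule min.boundedI)
      have "(\<integral>\<^sup>+ x. g2 x \<partial>Pm) \<le> (\<integral>\<^sup>+ x. ennreal (d^2) \<partial>Pm)" unfolding g2_def by (intro nn_integral_mono) simp
      also have "\<dots> = ennreal (d^2)" using probPm by simp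
      finally show "(\<integral>\<^sup>+ x. g2 x \<partial>Pm) \<le> ennreal (d^2)" .
      have "(\<integral>\<^sup>+ x. g2 x \<partial>Pm) \<le> (\<integral>\<^sup>+ x. g x \<partial>Pm)" unfolding g2_def by (intro nn_integral_mono) simp
      then show "(\<integral>\<^sup>+ x. g2 x \<partial>Pm) \<le> ennreal Tot" using gi by order
    qed
    also have "\<dots> = ennreal (min (d^2) Tot)" by (rule min_ennreal)
    also have "\<dots> \<le> ennreal (KC c \<alpha> \<beta> \<phi> r * min (max (\<tau>^2) \<epsilon>) (d^2))"
    proof (rule ennreal_leI, rule final_real)
      show "K1 + K2 + K3 \<ge> 0" using K0 by simp
      show "KC c \<alpha> \<beta> \<phi> r \<ge> 1 + (K1 + K2 + K3)" using KCe by simp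
      show "max (\<tau>^2) \<epsilon> \<ge> 0" using eps by simp
      show "d^2 \<ge> 0" by simp
      show "Tot \<le> (K1 + K2 + K3) * max (\<tau>^2) \<epsilon>"
      proof -
        have tsq: "\<tau>^2 = 4 * C10' * d^2 / (4^(Jbar - 1) * c^2)"
          unfolding \<tau>_def C_def using tau_sq[OF cp C10p' Jb1] by simp
        have T1: "25 * d^2 / 4^(J1 - 1) \<le> K1 * \<tau>^2 + K2 * \<epsilon>"
        proof (cases "J1 = max 1 (Jbar - r)")
          case True
          have JJr: "Jbar - 1 \<le> (J1 - 1) + r" using True Jb1 by auto
          have p: "(4::real)^(Jbar - 1) \<le> 4^(J1 - 1) * 4^r"
            unfolding power_add[symmetric] by (rule power_increasing[OF JJr]) auto
          have "d^2 / 4^(J1 - 1) = d^2 * 4^r / (4^(J1 - 1) * 4^r)" by simp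
          also have "\<dots> \<le> d^2 * 4^r / 4^(Jbar - 1)" by (rule divide_left_mono[OF p]) auto
          also have "d^2 * 4^r / 4^(Jbar - 1) = 4^r * c^2 * \<tau>^2 / (4 * C10')"
            unfolding tsq using cp C10p' by (simp add: field_simps)
          finally have X: "d^2 / 4^(J1 - 1) \<le> 4^r * c^2 * \<tau>^2 / (4 * C10')" .
          have "25 * d^2 / 4^(J1 - 1) = 25 * (d^2 / 4^(J1 - 1))" by simp
          also have "\<dots> \<le> 25 * (4^r * c^2 * \<tau>^2 / (4 * C10'))" using X by simp
          also have "\<dots> = K1 * \<tau>^2" unfolding K1_def by simp
          finally have "25 * d^2 / 4^(J1 - 1) \<le> K1 * \<tau>^2" .
          moreover have "K2 * \<epsilon> \<ge> 0" using K0 eps by simp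
          ultimately show ?thesis by linarith
        next
          case False
          then have lt: "J1 < max 1 (Jbar - r)" using J1a by auto
          have "Suc J1 \<notin> S"
          proof
            assume "Suc J1 \<in> S"
            then have "Suc J1 \<le> J1" unfolding J1_def using Max_ge[OF finS] by blast
            then show False by simp
          qed
          then have "\<not> (\<forall>i\<in>{2..Suc J1}. cond i)" using lt unfolding S_def by auto
          then have "\<not> cond (Suc J1)" using condJ by (auto simp: le_Suc_eq)
          then have nc: "C^2 * (d / (2^(J1 - 1) * c))^2 / (192 * \<beta>) < 3 * \<epsilon> * ln 2"
            unfolding cond_def using J1a by (simp add: not_le)
          define X where "X = d^2 / 4^(J1 - 1)"
          have q: "(2::real)^(J1 - 1) * 2^(J1 - 1) = 4^(J1 - 1)" by (simp flip: power_mult_distrib)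
          have dq: "(d / (2^(J1 - 1) * c))^2 = X / c^2" unfolding X_def
            using q by (simp add: power_divide power_mult_distrib power2_eq_square mult_ac)
          have pos: "c^2 * (192 * \<beta>) > 0" using cp bp by simp
          have e: "C^2 * (X / c^2) / (192 * \<beta>) = (C^2 * X) / (c^2 * (192 * \<beta>))" using cp bp by (simp add: field_simps)
          have "(C^2 * X) / (c^2 * (192 * \<beta>)) < 3 * \<epsilon> * ln 2" using nc unfolding dq e .
          then have "C^2 * X < 3 * \<epsilon> * ln 2 * (c^2 * (192 * \<beta>))" by (simp add: pos_divide_less_eq[OF pos])
          then have XZ: "X < 3 * \<epsilon> * ln 2 * (c^2 * (192 * \<beta>)) / C^2" using Cpos by (simp add: pos_less_divide_eq mult.commute)
          have "K2 * \<epsilon> = 25 * (3 * \<epsilon> * ln 2 * (c^2 * (192 * \<beta>)) / C^2)" unfolding K2_def by (simp add: field_simps)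
          then have "25 * X \<le> K2 * \<epsilon>" using XZ by linarith
          moreover have "25 * d^2 / 4^(J1 - 1) = 25 * X" unfolding X_def by simp
          moreover have "K1 * \<tau>^2 \<ge> 0" using K0 by simp
          ultimately show ?thesis by linarith
        qed
        have T2: "(\<Sum>j\<in>{2..J1}. 25 * d^2 / 4^(j - 2) *
          (real M' ^ 2 * exp (- (real N * (c / 2 - 1)^2 * (d / (2^(j - 2) * c))^2 / (192 * \<beta>))))) \<le> K3 * \<tau>^2"
        proof (cases "2 \<le> J1")
          case False
          then have "{2..J1} = {}" by auto
          then show ?thesis using K0 by simp
        next
          case True
          have Jb2: "2 \<le> Jbar" using True J1b by auto
          have M'e: "M' = the_enat ME" unfolding M'_def using True by simp
          define x where "x = real N * \<tau>^2"
          from JC[OF True] have hx: "x > ln 2" "x > 2 * ln ((real M')^2)"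
            unfolding Jcond_def Let_def x_def M'e ME_def using tc_eq[OF Jb2] unfolding \<tau>_def by auto
          have Mq: "(real M')^2 \<le> exp (x / 2)"
          proof (cases "M' = 0")
            case True then show ?thesis by simp
          next
            case False
            then have "(real M')^2 > 0" by simp
            then have "exp (ln ((real M')^2)) = (real M')^2" by simp
            moreover have "ln ((real M')^2) \<le> x / 2" using hx by simp
            ultimately show ?thesis by (metis exp_le_cancel_iff)
          qed
          have eqt: "25 * d^2 / 4^(j - 2) *
              (real M' ^ 2 * exp (- (real N * (c / 2 - 1)^2 * (d / (2^(j - 2) * c))^2 / (192 * \<beta>))))
            = \<kappa> * \<tau>^2 * 4^(Jbar - j) * ((real M')^2 * exp (- (b * x * 4^(Jbar - j))))" if j: "j \<in> {2..J1}" for j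
          proof -
            have j2: "2 \<le> j" "j \<le> Jbar" using j J1b by auto
            have e1: "d^2 / 4^(j - 2) = c^2 / C10' * \<tau>^2 * 4^(Jbar - j)"
              using term_id[OF cp C10p' j2] unfolding \<tau>_def C_def by simp
            have e2: "(d / (2^(j - 2) * c))^2 = \<tau>^2 * 4^(Jbar - j) / C10'"
              using delta_id[OF cp C10p' j2] unfolding \<tau>_def C_def by simp
            have e3: "real N * (c / 2 - 1)^2 * (d / (2^(j - 2) * c))^2 / (192 * \<beta>) = b * x * 4^(Jbar - j)"
              unfolding e2 b_def x_def C_def using C10p' bp by (simp add: field_simps)
            have e4: "25 * d^2 / 4^(j - 2) = \<kappa> * \<tau>^2 * 4^(Jbar - j)"
              using e1 unfolding \<kappa>_def by (simp add: field_simps)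
            show ?thesis unfolding e3 e4 by simp
          qed
          have "(\<Sum>j\<in>{2..J1}. 25 * d^2 / 4^(j - 2) *
              (real M' ^ 2 * exp (- (real N * (c / 2 - 1)^2 * (d / (2^(j - 2) * c))^2 / (192 * \<beta>)))))
              = (\<Sum>j\<in>{2..J1}. \<kappa> * \<tau>^2 * 4^(Jbar - j) * ((real M')^2 * exp (- (b * x * 4^(Jbar - j)))))"
            by (rule sum.cong[OF refl]) (rule eqt)
          also have "\<dots> \<le> 100 * \<kappa> * 4^r * \<tau>^2"
          proof (rule sum_bound)
            show "J1 + r \<le> Jbar" using jr[of J1] True by auto
            show "1 \<le> b * 4^r" "b > 0" by (rule b(1), rule b(2))
            show "x > ln 2" by (rule hx(1))
            show "0 \<le> (real M')^2" by simp
            show "(real M')^2 \<le> exp (x / 2)" by (rule Mq)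
            show "\<kappa> \<ge> 0" unfolding \<kappa>_def using C10p' by simp
            show "\<tau>^2 \<ge> 0" by simp
          qed
          also have "\<dots> = K3 * \<tau>^2" unfolding K3_def by simp
          finally show ?thesis .
        qed
        have "Tot \<le> K1 * \<tau>^2 + K2 * \<epsilon> + K3 * \<tau>^2" unfolding Tot_def using T1 T2 by linarith
        also have "\<dots> \<le> K1 * max (\<tau>^2) \<epsilon> + K2 * max (\<tau>^2) \<epsilon> + K3 * max (\<tau>^2) \<epsilon>"
          using K0 by (intro add_mono mult_left_mono) auto
        also have "\<dots> = (K1 + K2 + K3) * max (\<tau>^2) \<epsilon>" by (simp add: algebra_simps)
        finally show ?thesis .
      qed
    qed
    finally show ?thesis unfolding Pm_def \<tau>_def C10'_def C_def .
  qed
qed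

theorem mainTheorem4:
  fixes \<alpha> \<beta> \<phi> :: real
  assumes "0 < \<alpha>" "\<alpha> < \<beta>" "1 < \<phi>" "\<phi> < 3/2"
  shows "\<exists>c0::real. \<forall>c \<ge> c0. \<forall>(B :: 'a::euclidean_space set) (\<mu> :: 'a measure) F d.
     compact B \<and> B \<in> sets lborel \<and> emeasure lborel B > 0 \<and>
     prob_space \<mu> \<and> sets \<mu> = sets (restrict_space borel B) \<and>
     F \<subseteq> dens_class \<mu> B \<alpha> \<beta> \<and> star_shaped F \<and> d = L2diam \<mu> F
     \<longrightarrow> (\<exists>Kc > 0. \<forall>f N k \<epsilon> G A \<nu>1 Jt Lv off est Jbar.
        (let C = c / 2 - 1; C10' = C10 \<alpha> \<beta> C \<phi>;
             Pm = PiM {..<N} (\<lambda>_. density \<mu> (\<lambda>x. ennreal (f x)))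
         in
          f \<in> F \<and>
          0 < \<epsilon> \<and> \<epsilon> \<le> 1/3 \<and> 0 < k \<and> real k = 1 / (3 * \<epsilon>) \<and> k dvd N \<and>
          (\<Union>j<N div k. G j) = {..<N} \<and> (\<forall>j<N div k. card (G j) = k) \<and>
          (\<forall>i<N div k. \<forall>j<N div k. i \<noteq> j \<longrightarrow> G i \<inter> G j = {}) \<and>
          (\<forall>x\<in>space Pm. (\<forall>i<N. A x i \<in> B) \<and>
              real (card {i\<in>{..<N}. A x i \<noteq> x i}) \<le> \<epsilon> * real N) \<and>
          ((Jbar = 1 \<and> \<not> (\<exists>J\<ge>1. Jcond \<mu> F C10' C c d N J)) \<or>
           (1 \<le> Jbar \<and> Jcond \<mu> F C10' C c d N Jbar \<and> (\<forall>J>Jbar. \<not> Jcond \<mu> F C10' C c d N J))) \<and>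
          Jbar \<le> Jt \<and>
          valid_tree \<mu> F d c \<nu>1 Jt Lv off \<and>
          (\<forall>X. (\<forall>i<N. X i \<in> B) \<longrightarrow> estimator_path \<mu> N k G C c d Jt \<nu>1 off X (est X))
          \<longrightarrow> outer_exp Pm (\<lambda>x. (L2dist \<mu> (est (A x) Jt) f)^2)
                \<le> ennreal (Kc * min (max ((tauJ C10' C d Jbar)^2) \<epsilon>) (d^2))))"
proof -
  have cA: "cab \<alpha> \<beta> > 0" by (rule cab_pos[OF assms(1,2)])
  have bp: "\<beta> > 0" using assms by linarith
  define c0 where "c0 = 6 + 16 * \<beta> + 4 * \<beta> / \<alpha>^2 + 2 * (sqrt (1/\<alpha>) / sqrt (cab \<alpha> \<beta>))"
  have s1: "sqrt (1/\<alpha>) / sqrt (cab \<alpha> \<beta>) \<ge> 0" using cA assms by simp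
  have s2: "\<beta> / \<alpha>^2 \<ge> 0" using bp by simp
  show ?thesis
  proof (rule exI[of _ c0], intro allI impI)
    fix c :: real and B :: "'a set" and \<mu> :: "'a measure" and F :: "('a \<Rightarrow> real) set" and d :: real
    assume cc: "c0 \<le> c"
    assume H: "compact B \<and> B \<in> sets lborel \<and> 0 < emeasure lborel B \<and> prob_space \<mu> \<and>
      sets \<mu> = sets (restrict_space borel B) \<and> F \<subseteq> dens_class \<mu> B \<alpha> \<beta> \<and> star_shaped F \<and> d = L2diam \<mu> F"
    then have ps: "prob_space \<mu>" and sets: "sets \<mu> = sets (restrict_space borel B)"
      and Fd: "F \<subseteq> dens_class \<mu> B \<alpha> \<beta>" and st: "star_shaped F" and dd: "d = L2diam \<mu> F" by auto
    have sp: "space \<mu> = B" using sets_eq_imp_space_eq[OF sets] by (simp add: space_restrict_space)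
    have c4: "c \<ge> 4" using cc s1 s2 bp unfolding c0_def by linarith
    have Cbig: "c / 2 - 1 \<ge> 8 * \<beta> + 2 * \<beta> / \<alpha>^2" using cc s1 s2 bp unfolding c0_def by linarith
    have Cgt: "c / 2 - 1 > 1 + sqrt (1/\<alpha>) / sqrt (cab \<alpha> \<beta>)" using cc s1 s2 bp unfolding c0_def by linarith
    have C10p: "C10 \<alpha> \<beta> (c / 2 - 1) \<phi> > 0" by (rule C10_pos[OF assms(1,2) assms(4) Cgt])
    define b where "b = (c / 2 - 1)^2 / (192 * \<beta> * C10 \<alpha> \<beta> (c / 2 - 1) \<phi>)"
    have b0: "b > 0" unfolding b_def using C10p bp c4 by simp
    obtain r :: nat where "1 / b < 4^r" using real_arch_pow[of 4 "1 / b"] by auto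
    then have r: "1 \<le> (c / 2 - 1)^2 / (192 * \<beta> * C10 \<alpha> \<beta> (c / 2 - 1) \<phi>) * 4^r"
      using b0 unfolding b_def[symmetric] by (simp add: divide_less_eq mult.commute)
    have KCp: "KC c \<alpha> \<beta> \<phi> r > 0"
    proof -
      have "25 * 4^r * c^2 / (4 * C10 \<alpha> \<beta> (c / 2 - 1) \<phi>) \<ge> 0" using C10p by simp
      moreover have "25 * 576 * \<beta> * ln 2 * c^2 / (c / 2 - 1)^2 \<ge> 0" using bp by simp
      moreover have "100 * (25 * c^2 / C10 \<alpha> \<beta> (c / 2 - 1) \<phi>) * 4^r \<ge> 0" using C10p by simp
      ultimately show ?thesis unfolding KC_def by linarith
    qed
    show "\<exists>Kc>0. \<forall>f N k \<epsilon> G A \<nu>1 Jt Lv off est Jbar.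
        (let C = c / 2 - 1; C10' = C10 \<alpha> \<beta> C \<phi>;
             Pm = PiM {..<N} (\<lambda>_. density \<mu> (\<lambda>x. ennreal (f x)))
         in
          f \<in> F \<and>
          0 < \<epsilon> \<and> \<epsilon> \<le> 1/3 \<and> 0 < k \<and> real k = 1 / (3 * \<epsilon>) \<and> k dvd N \<and>
          (\<Union>j<N div k. G j) = {..<N} \<and> (\<forall>j<N div k. card (G j) = k) \<and>
          (\<forall>i<N div k. \<forall>j<N div k. i \<noteq> j \<longrightarrow> G i \<inter> G j = {}) \<and>
          (\<forall>x\<in>space Pm. (\<forall>i<N. A x i \<in> B) \<and>
              real (card {i\<in>{..<N}. A x i \<noteq> x i}) \<le> \<epsilon> * real N) \<and>
          ((Jbar = 1 \<and> \<not> (\<exists>J\<ge>1. Jcond \<mu> F C10' C c d N J)) \<or>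
           (1 \<le> Jbar \<and> Jcond \<mu> F C10' C c d N Jbar \<and> (\<forall>J>Jbar. \<not> Jcond \<mu> F C10' C c d N J))) \<and>
          Jbar \<le> Jt \<and>
          valid_tree \<mu> F d c \<nu>1 Jt Lv off \<and>
          (\<forall>X. (\<forall>i<N. X i \<in> B) \<longrightarrow> estimator_path \<mu> N k G C c d Jt \<nu>1 off X (est X))
          \<longrightarrow> outer_exp Pm (\<lambda>x. (L2dist \<mu> (est (A x) Jt) f)^2)
                \<le> ennreal (Kc * min (max ((tauJ C10' C d Jbar)^2) \<epsilon>) (d^2)))"
    proof (rule exI[of _ "KC c \<alpha> \<beta> \<phi> r"], rule conjI[OF KCp])
      show "\<forall>f N k \<epsilon> G A \<nu>1 Jt Lv off est Jbar.
        (let C = c / 2 - 1; C10' = C10 \<alpha> \<beta> C \<phi>;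
             Pm = PiM {..<N} (\<lambda>_. density \<mu> (\<lambda>x. ennreal (f x)))
         in
          f \<in> F \<and>
          0 < \<epsilon> \<and> \<epsilon> \<le> 1/3 \<and> 0 < k \<and> real k = 1 / (3 * \<epsilon>) \<and> k dvd N \<and>
          (\<Union>j<N div k. G j) = {..<N} \<and> (\<forall>j<N div k. card (G j) = k) \<and>
          (\<forall>i<N div k. \<forall>j<N div k. i \<noteq> j \<longrightarrow> G i \<inter> G j = {}) \<and>
          (\<forall>x\<in>space Pm. (\<forall>i<N. A x i \<in> B) \<and>
              real (card {i\<in>{..<N}. A x i \<noteq> x i}) \<le> \<epsilon> * real N) \<and>
          ((Jbar = 1 \<and> \<not> (\<exists>J\<ge>1. Jcond \<mu> F C10' C c d N J)) \<or>
           (1 \<le> Jbar \<and> Jcond \<mu> F C10' C c d N Jbar \<and> (\<forall>J>Jbar. \<not> Jcond \<mu> F C10' C c d N J))) \<and>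
          Jbar \<le> Jt \<and>
          valid_tree \<mu> F d c \<nu>1 Jt Lv off \<and>
          (\<forall>X. (\<forall>i<N. X i \<in> B) \<longrightarrow> estimator_path \<mu> N k G C c d Jt \<nu>1 off X (est X))
          \<longrightarrow> outer_exp Pm (\<lambda>x. (L2dist \<mu> (est (A x) Jt) f)^2)
                \<le> ennreal (KC c \<alpha> \<beta> \<phi> r * min (max ((tauJ C10' C d Jbar)^2) \<epsilon>) (d^2)))"
        unfolding Let_def
        apply (intro allI impI)
        apply (elim conjE)
        apply (rule main_body[OF ps sp assms(1,2) Fd st dd c4 Cbig C10p r])
        apply assumption+
        done
    qed
  qed
qed

end
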